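(* Let $\mathcal{A}$ be an alternating parity automaton and let $\mathcal{B}_{\mathcal{A}}$ be constructed from $\mathcal{A}$ as described in the context. If $\mathcal{B}_{\mathcal{A}}$ is GFG, then $\mathcal{A}$ is $\exists$-GFG.
   Context: An alternating parity automaton $\mathcal{A}=(\Sigma,Q,\iota,\delta,\alpha)$ has finite alphabet $\Sigma$, states $Q$, initial state $\iota$, transition function $\delta\colon Q\times\Sigma\to\mathcal{B}^+(Q)$ (positive Boolean formulas over atoms in $Q$), and priorities $\alpha\colon Q\times\Sigma\times Q\to\Gamma\subseteq\mathbb{N}$ on transitions; a sequence of transitions is accepting iff the maximal priority seen infinitely often is even. The model-checking game on $w=a_0a_1\dots$: from $\iota$, in round $i$ from $q_i$ the players descend $\delta(q_i,a_i)$, Eve choosing at disjunctions, Adam at conjunctions, to an atom $q_{i+1}$; Eve wins iff the transition sequence is accepting; $w\in L(\mathcal{A})$ iff Eve wins. Eve's letter game: each round Adam picks a letter and the players descend the transition condition of the current state over it; Eve wins iff the generated word is not in $L(\mathcal{A})$ or the generated path is accepting; $\mathcal{A}$ is $\exists$-GFG iff Eve wins this game. Boxes: for a letter $a$, a local strategy $\sigma$ chooses for each state $q$ and each subformula $\psi_1\vee\psi_2$ of $\delta(q,a)$ one disjunct; the box $\beta(\mathcal{A},a,\sigma)$ is the set of $(q,a,q')$ such that atom $q'$ is reachable from $\delta(q,a)$ following $\sigma$ at disjunctions and either conjunct at conjunctions; $\mathrm{Boxes}_{\mathcal{A},a}$ is the set of these boxes, $\mathrm{Boxes}_{\mathcal{A}}=\bigcup_a\mathrm{Boxes}_{\mathcal{A},a}$.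 A word $\beta_0\beta_1\dots$ over $\mathrm{Boxes}_{\mathcal{A}}$ is universally accepting if every transition sequence $(q_i,a_i,q_{i+1})$ with $q_0=\iota$ and $(q_i,a_i,q_{i+1})\in\beta_i$ is accepting. Construction: let $\mathcal{B}$ be a deterministic parity automaton over alphabet $\mathrm{Boxes}_{\mathcal{A}}$ recognising exactly the universally accepting words. $\mathcal{B}_{\mathcal{A}}$ is the nondeterministic automaton over $\Sigma$ with the states, initial state and acceptance condition of $\mathcal{B}$ that, on reading a letter $a$ in state $p$, nondeterministically guesses a box $\beta\in\mathrm{Boxes}_{\mathcal{A},a}$ and moves to $\delta_{\mathcal{B}}(p,\beta)$; runs of $\mathcal{B}_{\mathcal{A}}$ on $w=w_0w_1\dots$ correspond to sequences of boxes $\beta_i\in\mathrm{Boxes}_{\mathcal{A},w_i}$, and such a run is accepting iff $\mathcal{B}$ accepts $\beta_0\beta_1\dots$. $\mathcal{B}_{\mathcal{A}}$ is GFG iff Eve wins the game in which, each round, Adam picks a letter $a$ and Eve picks a box in $\mathrm{Boxes}_{\mathcal{A},a}$, Eve winning iff the generated word is not in $L(\mathcal{B}_{\mathcal{A}})$ or the generated run is accepting. *)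

theory Defs
  imports Main
begin

datatype 'q pbf = Atom 'q | And "'q pbf" "'q pbf" | Or "'q pbf" "'q pbf"

fun atoms :: "'q pbf \<Rightarrow> 'q set" where
  "atoms (Atom q) = {q}"
| "atoms (And f g) = atoms f \<union> atoms g"
| "atoms (Or f g) = atoms f \<union> atoms g"

record ('q, 'a) apa =
  alph :: "'a set"
  states :: "'q set"
  init :: 'q
  trans :: "'q \<Rightarrow> 'a \<Rightarrow> 'q pbf"
  prio :: "'q \<Rightarrow> 'a \<Rightarrow> 'q \<Rightarrow> nat"

definition wf_apa :: "('q, 'a) apa \<Rightarrow> bool" where
  "wf_apa A \<longleftrightarrow> finite (alph A) \<and> finite (states A) \<and> init A \<in> states A \<and>
     (\<forall>q\<in>states A. \<forall>a\<in>alph A. atoms (trans A q a) \<subseteq> states A)"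

definition parity_acc :: "(nat \<Rightarrow> nat) \<Rightarrow> bool" where
  "parity_acc f \<longleftrightarrow> (\<exists>p. even p \<and> (INFM i. f i = p) \<and> (\<forall>p'. (INFM i. f i = p') \<longrightarrow> p' \<le> p))"

definition acc_trans :: "('q, 'a) apa \<Rightarrow> (nat \<Rightarrow> 'q \<times> 'a \<times> 'q) \<Rightarrow> bool" where
  "acc_trans A t \<longleftrightarrow> parity_acc (\<lambda>i. case t i of (q, a, q') \<Rightarrow> prio A q a q')"

text \<open>Descending a formula: positions in the formula tree are bool lists
  (False = left, True = right); Eve chooses at disjunctions, Adam at conjunctions.\<close>
fun descend :: "(bool list \<Rightarrow> bool) \<Rightarrow> (bool list \<Rightarrow> bool) \<Rightarrow> bool list \<Rightarrow> 'q pbf \<Rightarrow> 'q" where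
  "descend e u p (Atom q) = q"
| "descend e u p (Or f g) =
     (if e p then descend e u (p @ [True]) g else descend e u (p @ [False]) f)"
| "descend e u p (And f g) =
     (if u p then descend e u (p @ [True]) g else descend e u (p @ [False]) f)"

type_synonym ('q, 'a) hist = "('q \<times> 'a \<times> 'q) list"
type_synonym ('q, 'a) strat = "('q, 'a) hist \<Rightarrow> 'a \<Rightarrow> bool list \<Rightarrow> bool"

text \<open>Generic play: the letter of each round is given by \<open>ltr\<close> (a function of the history),
  Eve's and Adam's strategies see the history, the current letter and the current
  position in the formula.\<close>
fun play :: "('q, 'a) apa \<Rightarrow> (('q, 'a) hist \<Rightarrow> 'a) \<Rightarrow> ('q, 'a) strat \<Rightarrow> ('q, 'a) strat
              \<Rightarrow> nat \<Rightarrow> ('q, 'a) hist \<times> 'q" where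
  "play A ltr e u 0 = ([], init A)"
| "play A ltr e u (Suc n) =
     (case play A ltr e u n of (h, q) \<Rightarrow>
        (let a = ltr h; q' = descend (e h a) (u h a) [] (trans A q a)
         in (h @ [(q, a, q')], q')))"

definition play_trans :: "('q, 'a) apa \<Rightarrow> (('q, 'a) hist \<Rightarrow> 'a) \<Rightarrow> ('q, 'a) strat \<Rightarrow> ('q, 'a) strat
                          \<Rightarrow> nat \<Rightarrow> 'q \<times> 'a \<times> 'q" where
  "play_trans A ltr e u i = fst (play A ltr e u (Suc i)) ! i"

text \<open>Model-checking game on a word \<open>w\<close>: the letter of round \<open>i\<close> is \<open>w i\<close>.\<close>
definition apa_lang :: "('q, 'a) apa \<Rightarrow> (nat \<Rightarrow> 'a) set" where
  "apa_lang A = {w. (\<forall>i. w i \<in> alph A) \<and>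
      (\<exists>e. \<forall>u. acc_trans A (play_trans A (\<lambda>h. w (length h)) e u))}"

text \<open>Eve's letter game: Adam chooses letters (from the alphabet) and resolves conjunctions.\<close>
definition exists_gfg :: "('q, 'a) apa \<Rightarrow> bool" where
  "exists_gfg A \<longleftrightarrow> (\<exists>e. \<forall>ltr u. (\<forall>h. ltr h \<in> alph A) \<longrightarrow>
      ((\<lambda>i. fst (snd (play_trans A ltr e u i))) \<notin> apa_lang A \<or> acc_trans A (play_trans A ltr e u)))"

text \<open>A local strategy for a letter chooses, for each state and each disjunctive subformula,
  one disjunct (True = right disjunct).\<close>
fun reach :: "('q pbf \<Rightarrow> bool) \<Rightarrow> 'q pbf \<Rightarrow> 'q set" where
  "reach s (Atom q) = {q}"
| "reach s (And f g) = reach s f \<union> reach s g"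
| "reach s (Or f g) = (if s (Or f g) then reach s g else reach s f)"

definition box :: "('q, 'a) apa \<Rightarrow> 'a \<Rightarrow> ('q \<Rightarrow> 'q pbf \<Rightarrow> bool) \<Rightarrow> ('q \<times> 'a \<times> 'q) set" where
  "box A a \<sigma> = {(q, a, q') | q q'. q \<in> states A \<and> q' \<in> reach (\<sigma> q) (trans A q a)}"

definition boxes_letter :: "('q, 'a) apa \<Rightarrow> 'a \<Rightarrow> ('q \<times> 'a \<times> 'q) set set" where
  "boxes_letter A a = {box A a \<sigma> | \<sigma>. True}"

definition boxes :: "('q, 'a) apa \<Rightarrow> ('q \<times> 'a \<times> 'q) set set" where
  "boxes A = (\<Union>a\<in>alph A. boxes_letter A a)"

definition univ_acc :: "('q, 'a) apa \<Rightarrow> (nat \<Rightarrow> ('q \<times> 'a \<times> 'q) set) \<Rightarrow> bool" where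
  "univ_acc A \<beta> \<longleftrightarrow> (\<forall>t. fst (t 0) = init A \<and>
       (\<forall>i. snd (snd (t i)) = fst (t (Suc i))) \<and> (\<forall>i. t i \<in> \<beta> i) \<longrightarrow> acc_trans A t)"

record ('p, 'b) dpa =
  dstates :: "'p set"
  dinit :: 'p
  dtrans :: "'p \<Rightarrow> 'b \<Rightarrow> 'p"
  dprio :: "'p \<Rightarrow> 'b \<Rightarrow> 'p \<Rightarrow> nat"

definition wf_dpa :: "('p, 'b) dpa \<Rightarrow> 'b set \<Rightarrow> bool" where
  "wf_dpa B S \<longleftrightarrow> finite (dstates B) \<and> dinit B \<in> dstates B \<and>
     (\<forall>p\<in>dstates B. \<forall>b\<in>S. dtrans B p b \<in> dstates B)"

fun drun :: "('p, 'b) dpa \<Rightarrow> (nat \<Rightarrow> 'b) \<Rightarrow> nat \<Rightarrow> 'p" where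
  "drun B w 0 = dinit B"
| "drun B w (Suc n) = dtrans B (drun B w n) (w n)"

definition dpa_accepts :: "('p, 'b) dpa \<Rightarrow> (nat \<Rightarrow> 'b) \<Rightarrow> bool" where
  "dpa_accepts B w \<longleftrightarrow> parity_acc (\<lambda>i. dprio B (drun B w i) (w i) (drun B w (Suc i)))"

definition recognises_univ_acc :: "('q, 'a) apa \<Rightarrow> ('p, ('q \<times> 'a \<times> 'q) set) dpa \<Rightarrow> bool" where
  "recognises_univ_acc A B \<longleftrightarrow> wf_dpa B (boxes A) \<and>
     (\<forall>\<beta>. (\<forall>i. \<beta> i \<in> boxes A) \<longrightarrow> (dpa_accepts B \<beta> \<longleftrightarrow> univ_acc A \<beta>))"

text \<open>Runs of B_A on \<open>w\<close> correspond to box sequences with \<open>\<beta> i \<in> boxes_letter A (w i)\<close>.\<close>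
definition BA_lang :: "('q, 'a) apa \<Rightarrow> ('p, ('q \<times> 'a \<times> 'q) set) dpa \<Rightarrow> (nat \<Rightarrow> 'a) set" where
  "BA_lang A B = {w. (\<forall>i. w i \<in> alph A) \<and>
      (\<exists>\<beta>. (\<forall>i. \<beta> i \<in> boxes_letter A (w i)) \<and> dpa_accepts B \<beta>)}"

fun gfg_play :: "(('a \<times> 'b) list \<Rightarrow> 'a) \<Rightarrow> (('a \<times> 'b) list \<Rightarrow> 'a \<Rightarrow> 'b) \<Rightarrow> nat \<Rightarrow> ('a \<times> 'b) list" where
  "gfg_play ad ev 0 = []"
| "gfg_play ad ev (Suc n) = (let h = gfg_play ad ev n; a = ad h in h @ [(a, ev h a)])"

text \<open>GFG game of B_A: Adam picks letters, Eve picks boxes for the current letter.\<close>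
definition BA_gfg :: "('q, 'a) apa \<Rightarrow> ('p, ('q \<times> 'a \<times> 'q) set) dpa \<Rightarrow> bool" where
  "BA_gfg A B \<longleftrightarrow> (\<exists>ev. (\<forall>h a. a \<in> alph A \<longrightarrow> ev h a \<in> boxes_letter A a) \<and>
     (\<forall>ad. (\<forall>h. ad h \<in> alph A) \<longrightarrow>
        ((\<lambda>i. fst (gfg_play ad ev (Suc i) ! i)) \<notin> BA_lang A B \<or>
         dpa_accepts B (\<lambda>i. snd (gfg_play ad ev (Suc i) ! i)))))"

end

theory Submission
  imports Defs "HOL-Library.Infinite_Set"
begin


lemma parity_acc_shift:
  "parity_acc (\<lambda>k. f (k + n)) \<longleftrightarrow> parity_acc f"
proof -
  have "(INFM k. f (k + n) = p) \<longleftrightarrow> (INFM k. f k = p)" for p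
  proof
    assume "INFM k. f (k + n) = p"
    then show "INFM k. f k = p" unfolding INFM_nat_le
    proof (intro allI)
      fix m assume "\<forall>m. \<exists>k\<ge>m. f (k + n) = p"
      then obtain k where "k \<ge> m" "f (k + n) = p" by blast
      then show "\<exists>k\<ge>m. f k = p" by (intro exI[of _ "k + n"]) auto
    qed
  next
    assume a: "INFM k. f k = p"
    show "INFM k. f (k + n) = p" unfolding INFM_nat_le
    proof
      fix m
      from a obtain j where "j \<ge> m + n" "f j = p" unfolding INFM_nat_le by blast
      then show "\<exists>k\<ge>m. f (k + n) = p" by (intro exI[of _ "j - n"]) auto
    qed
  qed
  then show ?thesis unfolding parity_acc_def by simp
qed

lemma parity_acc_max:
  assumes "\<And>k. f k \<le> d" and "INFM k. f k = d"
  shows "parity_acc f \<longleftrightarrow> even d"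
proof
  assume "parity_acc f"
  then obtain p where p: "even p" "INFM i. f i = p" "\<forall>p'. (INFM i. f i = p') \<longrightarrow> p' \<le> p"
    unfolding parity_acc_def by blast
  from p(2) obtain k where "f k = p" using INFM_EX by blast
  then have "p \<le> d" using assms(1)[of k] by simp
  moreover have "d \<le> p" using p(3) assms(2) by blast
  ultimately show "even d" using p(1) by simp
next
  assume "even d"
  moreover have "\<forall>p'. (INFM i. f i = p') \<longrightarrow> p' \<le> d"
  proof (intro allI impI)
    fix p' assume "INFM i. f i = p'"
    then obtain k where "f k = p'" using INFM_EX by blast
    then show "p' \<le> d" using assms(1)[of k] by simp
  qed
  ultimately show "parity_acc f" unfolding parity_acc_def using assms(2) by blast
qed

lemma descent:
  fixes r :: "'v \<Rightarrow> nat"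
  assumes "\<And>k. \<pi> k \<in> A - T \<Longrightarrow> \<pi> (Suc k) \<in> A \<and> r (\<pi> (Suc k)) < r (\<pi> k)"
    and "\<pi> 0 \<in> A"
  shows "\<exists>k. \<pi> k \<in> T"
proof (rule ccontr)
  assume "\<not> ?thesis"
  then have nT: "\<And>k. \<pi> k \<notin> T" by blast
  have "\<pi> k \<in> A \<and> r (\<pi> k) + k \<le> r (\<pi> 0)" for k
  proof (induction k)
    case 0 then show ?case using assms(2) by simp
  next
    case (Suc k)
    then have "\<pi> (Suc k) \<in> A \<and> r (\<pi> (Suc k)) < r (\<pi> k)" using assms(1) nT by blast
    with Suc show ?case by auto
  qed
  from this[of "Suc (r (\<pi> 0))"] show False by simp
qed

lemma wf_eventually_const:
  assumes "wf R" and "\<And>k. x (Suc k) = x k \<or> (x (Suc k), x k) \<in> R"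
  shows "\<exists>N. \<forall>k\<ge>N. x k = x N"
proof -
  obtain m where m: "m \<in> range x" "\<And>y. (y, m) \<in> R \<Longrightarrow> y \<notin> range x"
    using wfE_min[OF assms(1), of "x 0" "range x"] by blast
  then obtain N where N: "x N = m" by blast
  have "x (N + j) = m" for j
  proof (induction j)
    case 0 then show ?case using N by simp
  next
    case (Suc j)
    then show ?case using assms(2)[of "N + j"] m(2) by auto
  qed
  then have "\<forall>k\<ge>N. x k = m"
    by (metis le_add_diff_inverse)
  then show ?thesis using N by auto
qed

locale arena =
  fixes E :: "'v \<Rightarrow> 'v set" and own :: "'v \<Rightarrow> bool" and pr :: "'v \<Rightarrow> nat"
  assumes fin: "finite (E v)"
begin

definition subgame :: "'v set \<Rightarrow> bool" where
  "subgame G \<longleftrightarrow> (\<forall>v\<in>G. E v \<inter> G \<noteq> {})"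

definition ppath :: "'v set \<Rightarrow> (nat \<Rightarrow> 'v) \<Rightarrow> bool" where
  "ppath G \<pi> \<longleftrightarrow> (\<forall>k. \<pi> (Suc k) \<in> E (\<pi> k) \<inter> G)"

definition cons :: "bool \<Rightarrow> ('v \<Rightarrow> 'v) \<Rightarrow> (nat \<Rightarrow> 'v) \<Rightarrow> bool" where
  "cons p s \<pi> \<longleftrightarrow> (\<forall>k. own (\<pi> k) = p \<longrightarrow> \<pi> (Suc k) = s (\<pi> k))"

definition win :: "bool \<Rightarrow> (nat \<Rightarrow> 'v) \<Rightarrow> bool" where
  "win p \<pi> \<longleftrightarrow> (parity_acc (\<lambda>k. pr (\<pi> k)) = p)"

definition dominion :: "'v set \<Rightarrow> bool \<Rightarrow> 'v set \<Rightarrow> ('v \<Rightarrow> 'v) \<Rightarrow> bool" where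
  "dominion G p D s \<longleftrightarrow> D \<subseteq> G \<and> (\<forall>v\<in>D. own v = p \<longrightarrow> s v \<in> E v \<inter> D) \<and>
     (\<forall>v\<in>D. own v \<noteq> p \<longrightarrow> E v \<inter> G \<subseteq> D) \<and>
     (\<forall>\<pi>. \<pi> 0 \<in> D \<and> ppath G \<pi> \<and> cons p s \<pi> \<longrightarrow> win p \<pi>)"

lemma dominionD:
  assumes "dominion G p D s"
  shows "D \<subseteq> G" "\<And>v. v \<in> D \<Longrightarrow> own v = p \<Longrightarrow> s v \<in> E v"
    "\<And>v. v \<in> D \<Longrightarrow> own v = p \<Longrightarrow> s v \<in> D"
    "\<And>v w. v \<in> D \<Longrightarrow> own v \<noteq> p \<Longrightarrow> w \<in> E v \<Longrightarrow> w \<in> G \<Longrightarrow> w \<in> D"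
    "\<And>\<pi>. \<pi> 0 \<in> D \<Longrightarrow> ppath G \<pi> \<Longrightarrow> cons p s \<pi> \<Longrightarrow> win p \<pi>"
  using assms unfolding dominion_def by blast+

lemma dominionI:
  assumes "D \<subseteq> G" "\<And>v. v \<in> D \<Longrightarrow> own v = p \<Longrightarrow> s v \<in> E v \<inter> D"
    "\<And>v. v \<in> D \<Longrightarrow> own v \<noteq> p \<Longrightarrow> E v \<inter> G \<subseteq> D"
    "\<And>\<pi>. \<pi> 0 \<in> D \<Longrightarrow> ppath G \<pi> \<Longrightarrow> cons p s \<pi> \<Longrightarrow> win p \<pi>"
  shows "dominion G p D s"
  using assms unfolding dominion_def by blast

lemma win_shift: "win p (\<lambda>k. \<pi> (k + n)) \<longleftrightarrow> win p \<pi>"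
  unfolding win_def using parity_acc_shift[of "\<lambda>k. pr (\<pi> k)" n] by simp

lemma ppath_shift: "ppath G \<pi> \<Longrightarrow> ppath G (\<lambda>k. \<pi> (k + n))"
  unfolding ppath_def by simp

lemma dominion_stays:
  assumes "dominion G p D s" "\<pi> n \<in> D" "ppath G \<pi>"
    and "\<And>k. k \<ge> n \<Longrightarrow> \<pi> k \<in> D \<Longrightarrow> own (\<pi> k) = p \<Longrightarrow> \<pi> (Suc k) = s (\<pi> k)"
  shows "\<forall>k\<ge>n. \<pi> k \<in> D"
proof -
  have "\<pi> (n + j) \<in> D" for j
  proof (induction j)
    case 0 then show ?case using assms(2) by simp
  next
    case (Suc j)
    show ?case
    proof (cases "own (\<pi> (n + j)) = p")
      case True
      then have "\<pi> (Suc (n + j)) = s (\<pi> (n + j))" using assms(4)[of "n+j"] Suc by simp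
      then show ?thesis using assms(1) Suc True unfolding dominion_def by auto
    next
      case False
      have "\<pi> (Suc (n + j)) \<in> E (\<pi> (n + j)) \<inter> G" using assms(3) unfolding ppath_def by blast
      moreover have "E (\<pi> (n + j)) \<inter> G \<subseteq> D" using assms(1) Suc False unfolding dominion_def by blast
      ultimately show ?thesis by auto
    qed
  qed
  then show ?thesis
    by (metis le_add_diff_inverse)
qed

lemma dominion_win_from:
  assumes "dominion G p D s" "\<pi> n \<in> D" "ppath G \<pi>"
    and "\<And>k. k \<ge> n \<Longrightarrow> \<pi> k \<in> D \<Longrightarrow> own (\<pi> k) = p \<Longrightarrow> \<pi> (Suc k) = s (\<pi> k)"
  shows "win p \<pi>"
proof -
  have st: "\<forall>k\<ge>n. \<pi> k \<in> D" using dominion_stays[OF assms] .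
  have "win p (\<lambda>k. \<pi> (k + n))"
  proof -
    have "\<forall>\<rho>. \<rho> 0 \<in> D \<and> ppath G \<rho> \<and> cons p s \<rho> \<longrightarrow> win p \<rho>"
      using assms(1) unfolding dominion_def by blast
    moreover have "ppath G (\<lambda>k. \<pi> (k + n))" using assms(3) by (rule ppath_shift)
    moreover have "cons p s (\<lambda>k. \<pi> (k + n))" unfolding cons_def
    proof (intro allI impI)
      fix k assume "own (\<pi> (k + n)) = p"
      moreover have "\<pi> (k + n) \<in> D" using st by simp
      ultimately show "\<pi> (Suc k + n) = s (\<pi> (k + n))" using assms(4)[of "k + n"] by simp
    qed
    ultimately show ?thesis using assms(2) by simp
  qed
  then show ?thesis using win_shift by blast
qed

lemma dominion_empty: "dominion G p {} s"
  unfolding dominion_def by auto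

subsection \<open>Attractors\<close>

primrec attrn :: "'v set \<Rightarrow> bool \<Rightarrow> 'v set \<Rightarrow> nat \<Rightarrow> 'v set" where
  "attrn G p T 0 = T \<inter> G"
| "attrn G p T (Suc n) = attrn G p T n \<union> {v\<in>G. (own v = p \<and> E v \<inter> attrn G p T n \<noteq> {}) \<or>
      (own v \<noteq> p \<and> E v \<inter> G \<subseteq> attrn G p T n)}"

definition attr :: "'v set \<Rightarrow> bool \<Rightarrow> 'v set \<Rightarrow> 'v set" where
  "attr G p T = (\<Union>n. attrn G p T n)"

definition rank :: "'v set \<Rightarrow> bool \<Rightarrow> 'v set \<Rightarrow> 'v \<Rightarrow> nat" where
  "rank G p T v = (LEAST n. v \<in> attrn G p T n)"

definition astr :: "'v set \<Rightarrow> bool \<Rightarrow> 'v set \<Rightarrow> 'v \<Rightarrow> 'v" where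
  "astr G p T v = (SOME w. w \<in> E v \<inter> attrn G p T (rank G p T v - 1))"

lemma attrn_mono: "m \<le> n \<Longrightarrow> attrn G p T m \<subseteq> attrn G p T n"
proof (induction n)
  case 0 then show ?case by simp
next
  case (Suc n)
  then show ?case by (cases "m = Suc n") auto
qed

lemma attrn_sub: "attrn G p T n \<subseteq> G"
  by (induction n) auto

lemma attr_sub: "attr G p T \<subseteq> G"
  unfolding attr_def using attrn_sub by blast

lemma attr_base: "T \<inter> G \<subseteq> attr G p T"
  unfolding attr_def using attrn.simps(1)[of G p T] by blast

lemma rank_in: "v \<in> attr G p T \<Longrightarrow> v \<in> attrn G p T (rank G p T v)"
  unfolding attr_def rank_def by (auto intro: LeastI)

lemma rank_le: "v \<in> attrn G p T n \<Longrightarrow> rank G p T v \<le> n"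
  unfolding rank_def by (rule Least_le)

lemma attr_step:
  assumes "v \<in> attr G p T" "v \<notin> T"
  shows "(own v = p \<longrightarrow> astr G p T v \<in> E v \<and> astr G p T v \<in> attr G p T \<and>
            rank G p T (astr G p T v) < rank G p T v) \<and>
         (own v \<noteq> p \<longrightarrow> (\<forall>w\<in>E v \<inter> G. w \<in> attr G p T \<and> rank G p T w < rank G p T v))"
proof -
  let ?r = "rank G p T v"
  have vin: "v \<in> attrn G p T ?r" using rank_in[OF assms(1)] .
  have "?r \<noteq> 0" using vin assms(2) by (cases "?r") auto
  then obtain m where m: "?r = Suc m" by (cases ?r) auto
  have notm: "v \<notin> attrn G p T m" using rank_le[of v G p T m] m by auto
  have case_: "v \<in> G \<and> ((own v = p \<and> E v \<inter> attrn G p T m \<noteq> {}) \<or>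
      (own v \<noteq> p \<and> E v \<inter> G \<subseteq> attrn G p T m))"
    using vin notm m by auto
  have sub: "attrn G p T m \<subseteq> attr G p T" unfolding attr_def by blast
  show ?thesis
  proof (intro conjI impI)
    assume o: "own v = p"
    then have ex: "\<exists>w. w \<in> E v \<inter> attrn G p T (?r - 1)" using case_ m by auto
    have a: "astr G p T v \<in> E v \<inter> attrn G p T (?r - 1)"
      unfolding astr_def using someI_ex[OF ex] .
    then show "astr G p T v \<in> E v" by blast
    show "astr G p T v \<in> attr G p T" using a sub m by auto
    show "rank G p T (astr G p T v) < ?r" using a rank_le[of "astr G p T v" G p T m] m by auto
  next
    assume o: "own v \<noteq> p"
    then have "E v \<inter> G \<subseteq> attrn G p T m" using case_ by auto
    then show "\<forall>w\<in>E v \<inter> G. w \<in> attr G p T \<and> rank G p T w < ?r"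
      using sub rank_le[of _ G p T m] m by fastforce
  qed
qed

lemma attr_closed_p:
  assumes "v \<in> G" "own v = p" "w \<in> E v" "w \<in> attr G p T"
  shows "v \<in> attr G p T"
proof -
  from assms(4) obtain n where "w \<in> attrn G p T n" unfolding attr_def by blast
  then have "v \<in> attrn G p T (Suc n)" using assms by auto
  then show ?thesis unfolding attr_def by blast
qed

lemma finite_in_attrn:
  assumes "finite F" "F \<subseteq> attr G p T"
  shows "\<exists>n. F \<subseteq> attrn G p T n"
  using assms
proof (induction F rule: finite_induct)
  case empty then show ?case by simp
next
  case (insert x F)
  then obtain n where n: "F \<subseteq> attrn G p T n" by blast
  from insert obtain m where m: "x \<in> attrn G p T m" unfolding attr_def by blast
  have "F \<subseteq> attrn G p T (max n m)" using n attrn_mono[of n "max n m" G p T] by auto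
  moreover have "x \<in> attrn G p T (max n m)" using m attrn_mono[of m "max n m" G p T] by auto
  ultimately show ?case by blast
qed

lemma attr_closed_np:
  assumes "v \<in> G" "own v \<noteq> p" "E v \<inter> G \<subseteq> attr G p T"
  shows "v \<in> attr G p T"
proof -
  obtain n where "E v \<inter> G \<subseteq> attrn G p T n"
    using finite_in_attrn[OF _ assms(3)] fin by blast
  then have "v \<in> attrn G p T (Suc n)" using assms by auto
  then show ?thesis unfolding attr_def by blast
qed

lemma attr_dominion:
  assumes dom: "dominion G p D s"
  shows "dominion G p (attr G p D) (\<lambda>v. if v \<in> D then s v else astr G p D v)"
    (is "dominion G p ?A ?s")
proof -
  have DG: "D \<subseteq> G" and Ds: "\<forall>v\<in>D. own v = p \<longrightarrow> s v \<in> E v \<inter> D"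
    and Dt: "\<forall>v\<in>D. own v \<noteq> p \<longrightarrow> E v \<inter> G \<subseteq> D"
    using dom unfolding dominion_def by auto
  have DA: "D \<subseteq> ?A" using attr_base[of D G p] DG by blast
  have t1: "\<forall>v\<in>?A. own v = p \<longrightarrow> ?s v \<in> E v \<inter> ?A"
    using Ds DA attr_step[of _ G p D] by auto
  have t2: "\<forall>v\<in>?A. own v \<noteq> p \<longrightarrow> E v \<inter> G \<subseteq> ?A"
    using Dt DA attr_step[of _ G p D] by blast
  have w: "win p \<pi>" if \<pi>: "\<pi> 0 \<in> ?A" "ppath G \<pi>" "cons p ?s \<pi>" for \<pi>
  proof -
    have inA: "\<pi> k \<in> ?A" for k
    proof (induction k)
      case 0 then show ?case using \<pi> by simp
    next
      case (Suc k)
      show ?case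
      proof (cases "own (\<pi> k) = p")
        case True
        then have "\<pi> (Suc k) = ?s (\<pi> k)" using \<pi>(3) unfolding cons_def by blast
        then show ?thesis using t1 Suc True by auto
      next
        case False
        have "\<pi> (Suc k) \<in> E (\<pi> k) \<inter> G" using \<pi>(2) unfolding ppath_def by blast
        then show ?thesis using t2 Suc False by blast
      qed
    qed
    have "\<exists>k. \<pi> k \<in> D"
    proof (rule descent[of \<pi> ?A D "rank G p D"])
      fix k assume k: "\<pi> k \<in> ?A - D"
      show "\<pi> (Suc k) \<in> ?A \<and> rank G p D (\<pi> (Suc k)) < rank G p D (\<pi> k)"
      proof (cases "own (\<pi> k) = p")
        case True
        then have "\<pi> (Suc k) = astr G p D (\<pi> k)" using \<pi>(3) k unfolding cons_def by auto
        then show ?thesis using attr_step[of "\<pi> k" G p D] k True by auto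
      next
        case False
        have "\<pi> (Suc k) \<in> E (\<pi> k) \<inter> G" using \<pi>(2) unfolding ppath_def by blast
        then show ?thesis using attr_step[of "\<pi> k" G p D] k False by blast
      qed
    next
      show "\<pi> 0 \<in> ?A" using \<pi> by simp
    qed
    then obtain n where n: "\<pi> n \<in> D" by blast
    show ?thesis
    proof (rule dominion_win_from[OF dom n \<pi>(2)])
      fix k assume "\<pi> k \<in> D" "own (\<pi> k) = p"
      then show "\<pi> (Suc k) = s (\<pi> k)" using \<pi>(3) unfolding cons_def by auto
    qed
  qed
  show ?thesis
  proof (rule dominionI)
    show "?A \<subseteq> G" by (rule attr_sub)
  next
    fix v assume "v \<in> ?A" "own v = p" then show "?s v \<in> E v \<inter> ?A" using t1 by blast
  next
    fix v assume "v \<in> ?A" "own v \<noteq> p" then show "E v \<inter> G \<subseteq> ?A" using t2 by blast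
  next
    fix \<pi> assume "\<pi> 0 \<in> ?A" "ppath G \<pi>" "cons p ?s \<pi>" then show "win p \<pi>" by (rule w)
  qed
qed

subsection \<open>Unions of dominions\<close>

lemma dominion_Union:
  "\<exists>sU. dominion G p (\<Union>{D. \<exists>s. dominion G p D s}) sU"
proof -
  define U where "U = \<Union>{D. \<exists>s. dominion G p D s}"
  define r where "r = (SOME r::'v rel. Well_order r \<and> Field r = UNIV)"
  have r: "Well_order r \<and> Field r = UNIV" unfolding r_def by (rule someI_ex[OF well_ordering])
  then have wo: "Well_order r" and univ: "Field r = UNIV" by blast+
  define R where "R = r - Id"
  have wfR: "wf R" using wo unfolding R_def well_order_on_def by simp
  have "Total r" using wo unfolding well_order_on_def linear_order_on_def by simp
  then have tot: "x \<noteq> y \<Longrightarrow> (x, y) \<in> r \<or> (y, x) \<in> r" for x y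
    unfolding total_on_def univ by simp
  define DS where "DS x = (SOME ds. dominion G p (fst ds) (snd ds) \<and> x \<in> fst ds)" for x
  define Dx where "Dx x = fst (DS x)" for x
  define sx where "sx x = snd (DS x)" for x
  have Dx: "dominion G p (Dx x) (sx x) \<and> x \<in> Dx x" if "x \<in> U" for x
  proof -
    from that obtain D s where "dominion G p D s" "x \<in> D" unfolding U_def by blast
    then have "\<exists>ds. dominion G p (fst ds) (snd ds) \<and> x \<in> fst ds" by (intro exI[of _ "(D, s)"]) simp
    from someI_ex[OF this] show ?thesis unfolding Dx_def sx_def DS_def .
  qed
  have DxU: "Dx x \<subseteq> U" if "x \<in> U" for x
    using Dx[OF that] unfolding U_def by blast
  define S where "S v = {x \<in> U. v \<in> Dx x}" for v
  define idx where "idx v = (SOME x. x \<in> S v \<and> (\<forall>y. (y, x) \<in> R \<longrightarrow> y \<notin> S v))" for v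
  have idx: "idx v \<in> S v \<and> (\<forall>y. (y, idx v) \<in> R \<longrightarrow> y \<notin> S v)" if "v \<in> U" for v
  proof -
    have "v \<in> S v" using Dx[OF that] that unfolding S_def by blast
    then have "\<exists>x. x \<in> S v \<and> (\<forall>y. (y, x) \<in> R \<longrightarrow> y \<notin> S v)"
      using wfE_min[OF wfR, of v "S v"] by blast
    from someI_ex[OF this] show ?thesis unfolding idx_def .
  qed
  have idx2: "idx v \<in> U \<and> v \<in> Dx (idx v)" if "v \<in> U" for v
    using idx[OF that] unfolding S_def by blast
  define sU where "sU v = sx (idx v) v" for v
  have UG: "U \<subseteq> G" unfolding U_def using dominionD(1) by blast
  have t1: "\<forall>v\<in>U. own v = p \<longrightarrow> sU v \<in> E v \<inter> U"
  proof (intro ballI impI)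
    fix v assume v: "v \<in> U" "own v = p"
    have "dominion G p (Dx (idx v)) (sx (idx v))" using Dx idx2 v by blast
    then have "sU v \<in> E v \<inter> Dx (idx v)" using idx2 v dominionD(2,3) unfolding sU_def by blast
    then show "sU v \<in> E v \<inter> U" using DxU idx2 v by blast
  qed
  have t2: "\<forall>v\<in>U. own v \<noteq> p \<longrightarrow> E v \<inter> G \<subseteq> U"
  proof (intro ballI impI)
    fix v assume v: "v \<in> U" "own v \<noteq> p"
    have "dominion G p (Dx (idx v)) (sx (idx v))" using Dx idx2 v by blast
    then have "E v \<inter> G \<subseteq> Dx (idx v)" using idx2 v dominionD(4) by blast
    then show "E v \<inter> G \<subseteq> U" using DxU idx2 v by blast
  qed
  have w: "win p \<pi>" if \<pi>: "\<pi> 0 \<in> U" "ppath G \<pi>" "cons p sU \<pi>" for \<pi>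
  proof -
    have step: "\<pi> k \<in> U \<Longrightarrow> \<pi> (Suc k) \<in> Dx (idx (\<pi> k))" for k
    proof -
      assume a: "\<pi> k \<in> U"
      have d: "dominion G p (Dx (idx (\<pi> k))) (sx (idx (\<pi> k)))" using Dx[OF conjunct1[OF idx2[OF a]]] by blast
      show ?thesis
      proof (cases "own (\<pi> k) = p")
        case True
        then have "\<pi> (Suc k) = sU (\<pi> k)" using \<pi>(3) unfolding cons_def by blast
        moreover have "sU (\<pi> k) \<in> Dx (idx (\<pi> k))" unfolding sU_def
          by (rule dominionD(3)[OF d conjunct2[OF idx2[OF a]] True])
        ultimately show ?thesis by simp
      next
        case False
        have "\<pi> (Suc k) \<in> E (\<pi> k) \<inter> G" using \<pi>(2) unfolding ppath_def by blast
        then show ?thesis using dominionD(4)[OF d _ False] idx2[OF a] by blast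
      qed
    qed
    have inU: "\<pi> k \<in> U" for k
    proof (induction k)
      case 0 then show ?case using \<pi> by simp
    next
      case (Suc k) then show ?case using step[OF Suc.IH] DxU[OF conjunct1[OF idx2[OF Suc.IH]]] by blast
    qed
    define xk where "xk k = idx (\<pi> k)" for k
    have mono: "xk (Suc k) = xk k \<or> (xk (Suc k), xk k) \<in> R" for k
    proof -
      have "xk k \<in> S (\<pi> (Suc k))" using step[OF inU[of k]] idx2[OF inU[of k]]
        unfolding S_def xk_def by blast
      then have "(xk k, xk (Suc k)) \<notin> R" using idx[OF inU[of "Suc k"]] unfolding xk_def by blast
      then show ?thesis using tot[of "xk (Suc k)" "xk k"] unfolding R_def by auto
    qed
    obtain N where N: "\<forall>k\<ge>N. xk k = xk N" using wf_eventually_const[of R xk, OF wfR mono] by blast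
    have dN: "dominion G p (Dx (xk N)) (sx (xk N))" using Dx[OF conjunct1[OF idx2[OF inU[of N]]]] unfolding xk_def by blast
    have "\<pi> N \<in> Dx (xk N)" using idx2[OF inU[of N]] unfolding xk_def by blast
    then show "win p \<pi>"
    proof (rule dominion_win_from[OF dN _ \<pi>(2)])
      fix k assume k: "k \<ge> N" "own (\<pi> k) = p"
      then have "\<pi> (Suc k) = sU (\<pi> k)" using \<pi>(3) unfolding cons_def by blast
      also have "\<dots> = sx (xk N) (\<pi> k)"
      proof -
        have "xk k = xk N" using N k(1) by blast
        then have "idx (\<pi> k) = xk N" unfolding xk_def by simp
        then show ?thesis unfolding sU_def by simp
      qed
      finally show "\<pi> (Suc k) = sx (xk N) (\<pi> k)" .
    qed
  qed
  have "dominion G p U sU"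
  proof (rule dominionI)
    show "U \<subseteq> G" by (rule UG)
  next
    fix v assume "v \<in> U" "own v = p" then show "sU v \<in> E v \<inter> U" using t1 by blast
  next
    fix v assume "v \<in> U" "own v \<noteq> p" then show "E v \<inter> G \<subseteq> U" using t2 by blast
  next
    fix \<pi> assume "\<pi> 0 \<in> U" "ppath G \<pi>" "cons p sU \<pi>" then show "win p \<pi>" by (rule w)
  qed
  then show ?thesis unfolding U_def by blast
qed

lemma dominion_join:
  assumes d1: "dominion G p D1 s1" and d2: "dominion G2 p D2 s2" and G2: "G2 \<subseteq> G"
    and tr: "\<forall>v\<in>D2. own v \<noteq> p \<longrightarrow> E v \<inter> G \<subseteq> D1 \<union> D2"
  shows "dominion G p (D1 \<union> D2) (\<lambda>v. if v \<in> D1 then s1 v else s2 v)" (is "dominion G p ?D ?s")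
proof -
  have a1: "D1 \<subseteq> G" "\<forall>v\<in>D1. own v = p \<longrightarrow> s1 v \<in> E v \<inter> D1" "\<forall>v\<in>D1. own v \<noteq> p \<longrightarrow> E v \<inter> G \<subseteq> D1"
    using d1 unfolding dominion_def by auto
  have a2: "D2 \<subseteq> G2" "\<forall>v\<in>D2. own v = p \<longrightarrow> s2 v \<in> E v \<inter> D2"
    using d2 unfolding dominion_def by auto
  have t1: "\<forall>v\<in>?D. own v = p \<longrightarrow> ?s v \<in> E v \<inter> ?D" using a1 a2 by auto
  have t2: "\<forall>v\<in>?D. own v \<noteq> p \<longrightarrow> E v \<inter> G \<subseteq> ?D" using a1 tr by blast
  have w: "win p \<pi>" if \<pi>: "\<pi> 0 \<in> ?D" "ppath G \<pi>" "cons p ?s \<pi>" for \<pi>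
  proof (cases "\<exists>k. \<pi> k \<in> D1")
    case True
    then obtain n where n: "\<pi> n \<in> D1" by blast
    show ?thesis
    proof (rule dominion_win_from[OF d1 n \<pi>(2)])
      fix k assume "\<pi> k \<in> D1" "own (\<pi> k) = p"
      then show "\<pi> (Suc k) = s1 (\<pi> k)" using \<pi>(3) unfolding cons_def by auto
    qed
  next
    case False
    have in2: "\<pi> k \<in> D2" for k
    proof (induction k)
      case 0 then show ?case using \<pi> False by auto
    next
      case (Suc k)
      show ?case
      proof (cases "own (\<pi> k) = p")
        case True
        then have "\<pi> (Suc k) = s2 (\<pi> k)" using \<pi>(3) False unfolding cons_def by auto
        then show ?thesis using a2 Suc True by auto
      next
        case c: False
        have "\<pi> (Suc k) \<in> E (\<pi> k) \<inter> G" using \<pi>(2) unfolding ppath_def by blast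
        then show ?thesis using tr Suc c False by blast
      qed
    qed
    have pp: "ppath G2 \<pi>" using \<pi>(2) in2 a2(1) unfolding ppath_def by blast
    show ?thesis
    proof (rule dominion_win_from[OF d2 in2[of 0] pp])
      fix k assume "own (\<pi> k) = p"
      then show "\<pi> (Suc k) = s2 (\<pi> k)" using \<pi>(3) False unfolding cons_def by auto
    qed
  qed
  show ?thesis
  proof (rule dominionI)
    show "?D \<subseteq> G" using a1(1) a2(1) G2 by blast
  next
    fix v assume "v \<in> ?D" "own v = p" then show "?s v \<in> E v \<inter> ?D" using t1 by blast
  next
    fix v assume "v \<in> ?D" "own v \<noteq> p" then show "E v \<inter> G \<subseteq> ?D" using t2 by blast
  next
    fix \<pi> assume "\<pi> 0 \<in> ?D" "ppath G \<pi>" "cons p ?s \<pi>" then show "win p \<pi>" by (rule w)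
  qed
qed

subsection \<open>Positional determinacy\<close>

theorem positional_determinacy:
  "subgame G \<Longrightarrow> (\<forall>v\<in>G. pr v < d) \<Longrightarrow>
    \<exists>W1 s1 W0 s0. G \<subseteq> W1 \<union> W0 \<and> dominion G True W1 s1 \<and> dominion G False W0 s0"
proof (induction d arbitrary: G)
  case 0
  then have "G = {}" by auto
  then show ?case using dominion_empty by blast
next
  case (Suc d)
  define \<sigma> where "\<sigma> = even d"
  define U where "U = \<Union>{D. \<exists>s. dominion G (\<not>\<sigma>) D s}"
  obtain sU where dU: "dominion G (\<not>\<sigma>) U sU" using dominion_Union unfolding U_def by blast
  have UG: "U \<subseteq> G" using dominionD(1)[OF dU] .
  have attrU: "attr G (\<not>\<sigma>) U \<subseteq> U"
    using attr_dominion[OF dU] unfolding U_def by blast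
  have UA: "U \<subseteq> attr G (\<not>\<sigma>) U" using attr_base[of U G "\<not>\<sigma>"] UG by blast
  define G' where "G' = G - U"
  have G'a: "E v \<inter> G \<subseteq> G'" if "v \<in> G'" "own v = (\<not>\<sigma>)" for v
  proof
    fix w assume w: "w \<in> E v \<inter> G"
    show "w \<in> G'"
    proof (rule ccontr)
      assume "w \<notin> G'"
      then have "w \<in> attr G (\<not>\<sigma>) U" using w UA unfolding G'_def by blast
      then have "v \<in> attr G (\<not>\<sigma>) U" using attr_closed_p[of v G "\<not>\<sigma>" w U] that w
        unfolding G'_def by blast
      then show False using attrU that unfolding G'_def by blast
    qed
  qed
  have G'b: "E v \<inter> G' \<noteq> {}" if "v \<in> G'" "own v \<noteq> (\<not>\<sigma>)" for v
  proof
    assume "E v \<inter> G' = {}"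
    then have "E v \<inter> G \<subseteq> attr G (\<not>\<sigma>) U" using UA unfolding G'_def by blast
    then have "v \<in> attr G (\<not>\<sigma>) U" using attr_closed_np[of v G "\<not>\<sigma>" U] that
      unfolding G'_def by blast
    then show False using attrU that unfolding G'_def by blast
  qed
  have sg': "E v \<inter> G' \<noteq> {}" if "v \<in> G'" for v
  proof (cases "own v = (\<not>\<sigma>)")
    case True
    have "E v \<inter> G \<noteq> {}" using Suc.prems(1) that unfolding subgame_def G'_def by blast
    then show ?thesis using G'a[OF that True] by blast
  next
    case False then show ?thesis using G'b[OF that] by blast
  qed
  define N where "N = {v\<in>G'. pr v = d}"
  define X where "X = attr G' \<sigma> N"
  define G'' where "G'' = G' - X"
  have NX: "N \<subseteq> X" using attr_base[of N G' \<sigma>] unfolding X_def N_def by blast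
  have XG': "X \<subseteq> G'" using attr_sub unfolding X_def by blast
  have G''a: "E v \<inter> G' \<subseteq> G''" if "v \<in> G''" "own v = \<sigma>" for v
  proof
    fix w assume w: "w \<in> E v \<inter> G'"
    show "w \<in> G''"
    proof (rule ccontr)
      assume "w \<notin> G''"
      then have "w \<in> X" using w unfolding G''_def by blast
      then have "v \<in> X" using attr_closed_p[of v G' \<sigma> w N] that w
        unfolding G''_def X_def by blast
      then show False using that unfolding G''_def by blast
    qed
  qed
  have G''b: "E v \<inter> G'' \<noteq> {}" if "v \<in> G''" "own v \<noteq> \<sigma>" for v
  proof
    assume "E v \<inter> G'' = {}"
    then have "E v \<inter> G' \<subseteq> X" unfolding G''_def by blast
    then have "v \<in> X" using attr_closed_np[of v G' \<sigma> N] that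
      unfolding G''_def X_def by blast
    then show False using that unfolding G''_def by blast
  qed
  have sg'': "subgame G''" unfolding subgame_def
  proof
    fix v assume v: "v \<in> G''"
    show "E v \<inter> G'' \<noteq> {}"
    proof (cases "own v = \<sigma>")
      case True
      have "E v \<inter> G' \<noteq> {}" using sg' v unfolding G''_def by blast
      then show ?thesis using G''a[OF v True] by blast
    next
      case False then show ?thesis using G''b[OF v] by blast
    qed
  qed
  have pr'': "\<forall>v\<in>G''. pr v < d"
  proof
    fix v assume v: "v \<in> G''"
    then have "pr v < Suc d" using Suc.prems(2) unfolding G''_def G'_def by blast
    moreover have "v \<notin> N" using v NX unfolding G''_def by blast
    then have "pr v \<noteq> d" using v unfolding N_def G''_def by blast
    ultimately show "pr v < d" by simp
  qed
  obtain W1 s1 W0 s0 where IH: "G'' \<subseteq> W1 \<union> W0" "dominion G'' True W1 s1" "dominion G'' False W0 s0"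
    using Suc.IH[OF sg'' pr''] by blast
  obtain Ws ss Wn sn where W: "G'' \<subseteq> Ws \<union> Wn" "dominion G'' \<sigma> Ws ss" "dominion G'' (\<not>\<sigma>) Wn sn"
  proof (cases \<sigma>)
    case True then show ?thesis using that[of W1 W0 s1 s0] IH by auto
  next
    case False then show ?thesis using that[of W0 W1 s0 s1] IH by auto
  qed
  have G''G: "G'' \<subseteq> G" unfolding G''_def G'_def by blast
  have "dominion G (\<not>\<sigma>) (U \<union> Wn) (\<lambda>v. if v \<in> U then sU v else sn v)"
  proof (rule dominion_join[OF dU W(3) G''G])
    show "\<forall>v\<in>Wn. own v \<noteq> (\<not>\<sigma>) \<longrightarrow> E v \<inter> G \<subseteq> U \<union> Wn"
    proof (intro ballI impI subsetI)
      fix v w assume v: "v \<in> Wn" "own v \<noteq> (\<not>\<sigma>)" and w: "w \<in> E v \<inter> G"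
      show "w \<in> U \<union> Wn"
      proof (cases "w \<in> U")
        case False
        have vG'': "v \<in> G''" using dominionD(1)[OF W(3)] v by blast
        have "own v = \<sigma>" using v by simp
        then have "w \<in> G''" using G''a[OF vG''] w False unfolding G'_def by blast
        then have "w \<in> Wn" using dominionD(4)[OF W(3) v(1) v(2)] w by blast
        then show ?thesis by blast
      qed simp
    qed
  qed
  then have "U \<union> Wn \<subseteq> U" unfolding U_def by blast
  moreover have "Wn \<subseteq> G''" using dominionD(1)[OF W(3)] .
  ultimately have Wn: "Wn = {}" unfolding G''_def G'_def by blast
  have G''s: "G'' \<subseteq> Ws" using W(1) Wn by blast
  define s\<sigma> where "s\<sigma> v = (if v \<in> G'' then ss v else if v \<in> N then (SOME w. w \<in> E v \<inter> G')
     else astr G' \<sigma> N v)" for v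
  have dS: "dominion G \<sigma> G' s\<sigma>"
  proof (rule dominionI)
    show "G' \<subseteq> G" unfolding G'_def by blast
  next
    fix v assume v: "v \<in> G'" "own v = \<sigma>"
    show "s\<sigma> v \<in> E v \<inter> G'"
    proof (cases "v \<in> G''")
      case True
      then have "ss v \<in> E v \<inter> Ws" using dominionD(2,3)[OF W(2) _ v(2)] G''s by blast
      then show ?thesis using True dominionD(1)[OF W(2)] unfolding s\<sigma>_def G''_def by auto
    next
      case False
      show ?thesis
      proof (cases "v \<in> N")
        case True
        have "\<exists>w. w \<in> E v \<inter> G'" using sg'[OF v(1)] by blast
        from someI_ex[OF this] show ?thesis using True False unfolding s\<sigma>_def by simp
      next
        case nN: False
        have vX: "v \<in> X" using v(1) False unfolding G''_def by blast
        have "astr G' \<sigma> N v \<in> E v \<and> astr G' \<sigma> N v \<in> attr G' \<sigma> N"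
          using attr_step[of v G' \<sigma> N] vX nN v(2) unfolding X_def by blast
        then show ?thesis using False nN XG' unfolding s\<sigma>_def X_def by auto
      qed
    qed
  next
    fix v assume "v \<in> G'" "own v \<noteq> \<sigma>"
    then show "E v \<inter> G \<subseteq> G'" using G'a by simp
  next
    fix \<pi> assume \<pi>: "\<pi> 0 \<in> G'" "ppath G \<pi>" "cons \<sigma> s\<sigma> \<pi>"
    have in': "\<pi> k \<in> G'" for k
    proof (induction k)
      case 0 then show ?case using \<pi> by simp
    next
      case (Suc k)
      have e: "\<pi> (Suc k) \<in> E (\<pi> k) \<inter> G" using \<pi>(2) unfolding ppath_def by blast
      show ?case
      proof (cases "own (\<pi> k) = \<sigma>")
        case True
        then have "\<pi> (Suc k) = s\<sigma> (\<pi> k)" using \<pi>(3) unfolding cons_def by blast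
        moreover have "s\<sigma> (\<pi> k) \<in> G'"
        proof -
          have "s\<sigma> (\<pi> k) \<in> E (\<pi> k) \<inter> G'"
          proof (cases "\<pi> k \<in> G''")
            case True
            then have "ss (\<pi> k) \<in> Ws" using dominionD(3)[OF W(2) _ \<open>own (\<pi> k) = \<sigma>\<close>] G''s by blast
            then show ?thesis using True dominionD(1)[OF W(2)] dominionD(2)[OF W(2) _ \<open>own (\<pi> k) = \<sigma>\<close>] G''s
              unfolding s\<sigma>_def G''_def by auto
          next
            case False
            show ?thesis
            proof (cases "\<pi> k \<in> N")
              case True
              have "\<exists>w. w \<in> E (\<pi> k) \<inter> G'" using sg'[OF Suc.IH] by blast
              from someI_ex[OF this] show ?thesis using True False unfolding s\<sigma>_def by simp
            next
              case nN: False
              have vX: "\<pi> k \<in> X" using Suc.IH False unfolding G''_def by blast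
              have "astr G' \<sigma> N (\<pi> k) \<in> E (\<pi> k) \<and> astr G' \<sigma> N (\<pi> k) \<in> attr G' \<sigma> N"
                using attr_step[of "\<pi> k" G' \<sigma> N] vX nN \<open>own (\<pi> k) = \<sigma>\<close> unfolding X_def by blast
              then show ?thesis using False nN XG' unfolding s\<sigma>_def X_def by auto
            qed
          qed
          then show ?thesis by blast
        qed
        ultimately show ?thesis by simp
      next
        case False
        then show ?thesis using G'a[OF Suc.IH] e by auto
      qed
    qed
    show "win \<sigma> \<pi>"
    proof (cases "\<forall>m. \<exists>k\<ge>m. \<pi> k \<in> X")
      case True
      have "\<exists>j\<ge>m. \<pi> j \<in> N" for m
      proof -
        obtain k where k: "k \<ge> m" "\<pi> k \<in> X" using True by blast
        have "\<exists>j. \<pi> (j + k) \<in> N"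
        proof (rule descent[of "\<lambda>j. \<pi> (j + k)" X N "rank G' \<sigma> N"])
          fix j assume j: "\<pi> (j + k) \<in> X - N"
          have jG'': "\<pi> (j + k) \<notin> G''" using j unfolding G''_def by blast
          have e: "\<pi> (Suc (j + k)) \<in> E (\<pi> (j + k)) \<inter> G'" using \<pi>(2) in' unfolding ppath_def by blast
          show "\<pi> (Suc j + k) \<in> X \<and> rank G' \<sigma> N (\<pi> (Suc j + k)) < rank G' \<sigma> N (\<pi> (j + k))"
          proof (cases "own (\<pi> (j + k)) = \<sigma>")
            case True
            then have "\<pi> (Suc (j + k)) = s\<sigma> (\<pi> (j + k))" using \<pi>(3) unfolding cons_def by blast
            also have "\<dots> = astr G' \<sigma> N (\<pi> (j + k))" using jG'' j unfolding s\<sigma>_def by simp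
            finally show ?thesis using attr_step[of "\<pi> (j + k)" G' \<sigma> N] j True unfolding X_def by auto
          next
            case False
            then show ?thesis using attr_step[of "\<pi> (j + k)" G' \<sigma> N] j e unfolding X_def by auto
          qed
        next
          show "\<pi> (0 + k) \<in> X" using k by simp
        qed
        then obtain j where "\<pi> (j + k) \<in> N" by blast
        then show ?thesis using k(1) by (intro exI[of _ "j + k"]) auto
      qed
      then have inf: "INFM k. pr (\<pi> k) = d" unfolding INFM_nat_le N_def by blast
      have le: "pr (\<pi> k) \<le> d" for k
        using Suc.prems(2) in'[of k] unfolding G'_def by fastforce
      have "parity_acc (\<lambda>k. pr (\<pi> k)) \<longleftrightarrow> even d" by (rule parity_acc_max[OF le inf])
      then show ?thesis unfolding win_def \<sigma>_def by simp
    next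
      case False
      then obtain m where m: "\<forall>k\<ge>m. \<pi> k \<notin> X" by blast
      then have inG'': "\<pi> k \<in> G''" if "k \<ge> m" for k using in' that unfolding G''_def by blast
      define \<rho> where "\<rho> j = \<pi> (j + m)" for j
      have pp: "ppath G'' \<rho>" unfolding ppath_def \<rho>_def
        using \<pi>(2) inG'' unfolding ppath_def by auto
      have "win \<sigma> \<rho>"
      proof (rule dominion_win_from[OF W(2) _ pp])
        show "\<rho> 0 \<in> Ws" using inG''[of m] G''s unfolding \<rho>_def by auto
      next
        fix k assume "own (\<rho> k) = \<sigma>"
        then have "\<rho> (Suc k) = s\<sigma> (\<rho> k)" using \<pi>(3) unfolding cons_def \<rho>_def by simp
        also have "\<dots> = ss (\<rho> k)" using inG''[of "k + m"] unfolding s\<sigma>_def \<rho>_def by simp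
        finally show "\<rho> (Suc k) = ss (\<rho> k)" .
      qed
      then show ?thesis using win_shift unfolding \<rho>_def by blast
    qed
  qed
  have cover: "G \<subseteq> G' \<union> U" unfolding G'_def by blast
  show ?case
  proof (cases \<sigma>)
    case True
    then show ?thesis using cover dS dU by auto
  next
    case False
    then show ?thesis using cover dS dU by auto
  qed
qed

end



lemma reach_atoms: "reach s \<phi> \<subseteq> atoms \<phi>"
  by (induction \<phi>) auto

lemma reach_nonempty: "reach s \<phi> \<noteq> {}"
  by (induction \<phi>) auto

lemma finite_atoms: "finite (atoms \<phi>)"
  by (induction \<phi>) auto

lemma descend_atoms: "descend c u p \<phi> \<in> atoms \<phi>"
  by (induction \<phi> arbitrary: p) auto

lemma descend_local:
  assumes "\<And>r. u (p @ r) = u' (p @ r)"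
  shows "descend c u p \<phi> = descend c u' p \<phi>"
  using assms
proof (induction \<phi> arbitrary: p)
  case (Atom q) then show ?case by simp
next
  case (And f g)
  have up: "u p = u' p" using And.prems[of "[]"] by simp
  have f: "descend c u (p @ [False]) f = descend c u' (p @ [False]) f"
    by (rule And.IH(1)) (use And.prems[of "False # _"] in simp)
  have g: "descend c u (p @ [True]) g = descend c u' (p @ [True]) g"
    by (rule And.IH(2)) (use And.prems[of "True # _"] in simp)
  show ?case using up f g by simp
next
  case (Or f g)
  have f: "descend c u (p @ [False]) f = descend c u' (p @ [False]) f"
    by (rule Or.IH(1)) (use Or.prems[of "False # _"] in simp)
  have g: "descend c u (p @ [True]) g = descend c u' (p @ [True]) g"
    by (rule Or.IH(2)) (use Or.prems[of "True # _"] in simp)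
  show ?case using f g by simp
qed

fun canwin :: "'q set \<Rightarrow> 'q pbf \<Rightarrow> bool" where
  "canwin T (Atom q) = (q \<in> T)"
| "canwin T (And f g) = (canwin T f \<and> canwin T g)"
| "canwin T (Or f g) = (canwin T f \<or> canwin T g)"

definition ls :: "'q set \<Rightarrow> 'q pbf \<Rightarrow> bool" where
  "ls T \<psi> = (case \<psi> of Or f g \<Rightarrow> \<not> canwin T f | _ \<Rightarrow> False)"

lemma reach_ls: "canwin T \<phi> \<Longrightarrow> reach (ls T) \<phi> \<subseteq> T"
  by (induction \<phi>) (auto simp: ls_def)

lemma canwin_O:
  assumes "\<And>u. descend c u p \<phi> \<in> T"
  shows "canwin T \<phi>"
  using assms
proof (induction \<phi> arbitrary: p)
  case (Atom q)
  then show ?case by simp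
next
  case (And f g)
  have "canwin T f"
  proof (rule And.IH(1)[of "p @ [False]"])
    fix u
    have "descend c (u(p := False)) p (And f g) \<in> T" by (rule And.prems)
    then have "descend c (u(p := False)) (p @ [False]) f \<in> T" by simp
    moreover have "descend c (u(p := False)) (p @ [False]) f = descend c u (p @ [False]) f"
      by (rule descend_local) simp
    ultimately show "descend c u (p @ [False]) f \<in> T" by simp
  qed
  moreover have "canwin T g"
  proof (rule And.IH(2)[of "p @ [True]"])
    fix u
    have "descend c (u(p := True)) p (And f g) \<in> T" by (rule And.prems)
    then have "descend c (u(p := True)) (p @ [True]) g \<in> T" by simp
    moreover have "descend c (u(p := True)) (p @ [True]) g = descend c u (p @ [True]) g"
      by (rule descend_local) simp
    ultimately show "descend c u (p @ [True]) g \<in> T" by simp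
  qed
  ultimately show ?case by simp
next
  case (Or f g)
  show ?case
  proof (cases "c p")
    case True
    have "canwin T g"
    proof (rule Or.IH(2)[of "p @ [True]"])
      fix u
      have "descend c u p (Or f g) \<in> T" by (rule Or.prems)
      then show "descend c u (p @ [True]) g \<in> T" using True by simp
    qed
    then show ?thesis by simp
  next
    case False
    have "canwin T f"
    proof (rule Or.IH(1)[of "p @ [False]"])
      fix u
      have "descend c u p (Or f g) \<in> T" by (rule Or.prems)
      then show "descend c u (p @ [False]) f \<in> T" using False by simp
    qed
    then show ?thesis by simp
  qed
qed

fun child :: "bool \<Rightarrow> 'q pbf \<Rightarrow> 'q pbf" where
  "child b (Atom q) = Atom q"
| "child b (And f g) = (if b then g else f)"
| "child b (Or f g) = (if b then g else f)"

fun subf :: "'q pbf \<Rightarrow> bool list \<Rightarrow> 'q pbf" where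
  "subf \<phi> [] = \<phi>"
| "subf \<phi> (b # bs) = subf (child b \<phi>) bs"

lemma subf_snoc: "subf \<phi> (p @ [b]) = child b (subf \<phi> p)"
  by (induction p arbitrary: \<phi>) auto

lemma descend_reach:
  assumes "subf \<phi>0 p = \<phi>"
  shows "descend (\<lambda>p. s (subf \<phi>0 p)) u p \<phi> \<in> reach s \<phi>"
  using assms
proof (induction \<phi> arbitrary: p)
  case (Atom q) then show ?case by simp
next
  case (And f g)
  have "subf \<phi>0 (p @ [False]) = f" "subf \<phi>0 (p @ [True]) = g"
    using And.prems by (simp_all add: subf_snoc)
  then show ?case using And.IH by auto
next
  case (Or f g)
  have "subf \<phi>0 (p @ [False]) = f" "subf \<phi>0 (p @ [True]) = g"
    using Or.prems by (simp_all add: subf_snoc)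
  then show ?case using Or.IH Or.prems by auto
qed

definition stretch3 :: "(nat \<Rightarrow> 'x) \<Rightarrow> (nat \<Rightarrow> 'x) \<Rightarrow> (nat \<Rightarrow> 'x) \<Rightarrow> nat \<Rightarrow> 'x" where
  "stretch3 a b c k = (if k mod 3 = 0 then a (k div 3) else if k mod 3 = 1 then b (k div 3) else c (k div 3))"

lemma stretch3_simps [simp]:
  "stretch3 a b c (3 * n) = a n"
  "stretch3 a b c (Suc (3 * n)) = b n"
  "stretch3 a b c (Suc (Suc (3 * n))) = c n"
proof -
  have "Suc (3 * n) mod 3 = 1" "Suc (3 * n) div 3 = n" "Suc (Suc (3 * n)) mod 3 = 2" "Suc (Suc (3 * n)) div 3 = n"
    by presburger+
  then show "stretch3 a b c (3 * n) = a n" "stretch3 a b c (Suc (3 * n)) = b n"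
    "stretch3 a b c (Suc (Suc (3 * n))) = c n" unfolding stretch3_def by simp_all
qed

lemma stretch3_0 [simp]: "stretch3 a b c 0 = a 0"
  unfolding stretch3_def by simp

lemma three_cases:
  assumes "\<And>n. P (3 * n)" "\<And>n. P (Suc (3 * n))" "\<And>n. P (Suc (Suc (3 * n)))"
  shows "P k"
proof -
  have "k = 3 * (k div 3) + k mod 3" by simp
  moreover have "k mod 3 = 0 \<or> k mod 3 = 1 \<or> k mod 3 = 2" by auto
  ultimately show ?thesis using assms
    by (metis add.right_neutral add_Suc_right one_add_one numeral_2_eq_2 plus_1_eq_Suc)
qed

lemma finite_range_INFM:
  fixes f :: "nat \<Rightarrow> 'b"
  assumes "finite (range f)"
  shows "\<exists>p. INFM n. f n = p"
proof -
  have "INFM n. \<exists>p\<in>range f. f n = p" by (simp add: infinite_UNIV_nat)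
  then have "\<exists>p\<in>range f. INFM n. f n = p"
    using INFM_finite_Bex_distrib[OF assms, of "\<lambda>p n. f n = p"] by simp
  then show ?thesis by blast
qed

lemma parity_acc_stretch:
  fixes f :: "nat \<Rightarrow> nat"
  assumes fin: "finite (range f)"
  shows "parity_acc (stretch3 (\<lambda>_. 0) (\<lambda>_. 0) f) \<longleftrightarrow> parity_acc f"
proof -
  let ?g = "stretch3 (\<lambda>_. 0) (\<lambda>_. 0) f"
  have i0: "INFM k. ?g k = 0" unfolding INFM_nat_le
  proof
    fix m show "\<exists>k\<ge>m. ?g k = 0" by (intro exI[of _ "3 * m"]) simp
  qed
  have ip: "(INFM k. ?g k = p) \<longleftrightarrow> (INFM n. f n = p)" if "p \<noteq> 0" for p
  proof
    assume a: "INFM k. ?g k = p"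
    show "INFM n. f n = p" unfolding INFM_nat_le
    proof
      fix m
      from a obtain k where k: "k \<ge> 3 * m" "?g k = p" unfolding INFM_nat_le by blast
      have "k mod 3 \<noteq> 0 \<and> k mod 3 \<noteq> 1" using k(2) that unfolding stretch3_def
        by (cases "k mod 3 = 0"; cases "k mod 3 = 1") auto
      then have "f (k div 3) = p" using k(2) unfolding stretch3_def by auto
      moreover have "k div 3 \<ge> m" using k(1) by auto
      ultimately show "\<exists>n\<ge>m. f n = p" by blast
    qed
  next
    assume a: "INFM n. f n = p"
    show "INFM k. ?g k = p" unfolding INFM_nat_le
    proof
      fix m
      from a obtain n where n: "n \<ge> m" "f n = p" unfolding INFM_nat_le by blast
      show "\<exists>k\<ge>m. ?g k = p" using n by (intro exI[of _ "Suc (Suc (3 * n))"]) simp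
    qed
  qed
  show ?thesis
  proof
    assume "parity_acc ?g"
    then obtain p where p: "even p" "INFM k. ?g k = p" "\<forall>p'. (INFM k. ?g k = p') \<longrightarrow> p' \<le> p"
      unfolding parity_acc_def by blast
    show "parity_acc f"
    proof (cases "p = 0")
      case False
      have "INFM n. f n = p" using ip[OF False] p(2) by simp
      moreover have "\<forall>p'. (INFM n. f n = p') \<longrightarrow> p' \<le> p"
      proof (intro allI impI)
        fix p' assume "INFM n. f n = p'"
        then show "p' \<le> p" using ip[of p'] p(3) by (cases "p' = 0") auto
      qed
      ultimately show ?thesis unfolding parity_acc_def using p(1) by blast
    next
      case True
      obtain p0 where p0: "INFM n. f n = p0" using finite_range_INFM[OF fin] by blast
      have "p0 = 0"
      proof (rule ccontr)
        assume "p0 \<noteq> 0"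
        then have "INFM k. ?g k = p0" using ip p0 by blast
        then show False using p(3) True \<open>p0 \<noteq> 0\<close> by fastforce
      qed
      have "\<forall>p'. (INFM n. f n = p') \<longrightarrow> p' \<le> 0"
      proof (intro allI impI)
        fix p' assume "INFM n. f n = p'"
        then show "p' \<le> 0" using ip[of p'] p(3) True by (cases "p' = 0") auto
      qed
      then show ?thesis unfolding parity_acc_def using p0 \<open>p0 = 0\<close> by blast
    qed
  next
    assume "parity_acc f"
    then obtain p where p: "even p" "INFM n. f n = p" "\<forall>p'. (INFM n. f n = p') \<longrightarrow> p' \<le> p"
      unfolding parity_acc_def by blast
    have "INFM k. ?g k = p" using ip p(2) i0 by (cases "p = 0") auto
    moreover have "\<forall>p'. (INFM k. ?g k = p') \<longrightarrow> p' \<le> p"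
    proof (intro allI impI)
      fix p' assume "INFM k. ?g k = p'"
      then show "p' \<le> p" using ip[of p'] p(3) by (cases "p' = 0") auto
    qed
    ultimately show "parity_acc ?g" unfolding parity_acc_def using p(1) by blast
  qed
qed


section \<open>The model-checking arena\<close>

datatype 'q vtx = VE nat 'q | VA nat 'q "'q set" | VT nat 'q 'q

definition opts :: "('q, 'a) apa \<Rightarrow> 'q \<Rightarrow> 'a \<Rightarrow> 'q set set" where
  "opts A q a = {reach s (trans A q a) | s. True}"

fun aE :: "('q, 'a) apa \<Rightarrow> (nat \<Rightarrow> 'a) \<Rightarrow> 'q vtx \<Rightarrow> 'q vtx set" where
  "aE A w (VE i q) = VA i q ` opts A q (w i)"
| "aE A w (VA i q S) = VT i q ` (S \<inter> atoms (trans A q (w i)))"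
| "aE A w (VT i q q') = {VE (Suc i) q'}"

fun aown :: "'q vtx \<Rightarrow> bool" where
  "aown (VE i q) = True"
| "aown (VA i q S) = False"
| "aown (VT i q q') = True"

fun apr :: "('q, 'a) apa \<Rightarrow> (nat \<Rightarrow> 'a) \<Rightarrow> 'q vtx \<Rightarrow> nat" where
  "apr A w (VE i q) = 0"
| "apr A w (VA i q S) = 0"
| "apr A w (VT i q q') = prio A q (w i) q'"

lemma opts_finite: "finite (opts A q a)"
proof -
  have "opts A q a \<subseteq> Pow (atoms (trans A q a))"
  proof
    fix S assume "S \<in> opts A q a"
    then obtain s where "S = reach s (trans A q a)" unfolding opts_def by blast
    then show "S \<in> Pow (atoms (trans A q a))" using reach_atoms[of s "trans A q a"] by simp
  qed
  then show ?thesis using finite_atoms by (metis finite_Pow_iff finite_subset)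
qed

lemma arena_a: "arena (aE A w)"
proof
  fix v show "finite (aE A w v)"
    by (cases v) (auto simp: opts_finite finite_atoms)
qed

definition Gs :: "('q, 'a) apa \<Rightarrow> (nat \<Rightarrow> 'a) \<Rightarrow> 'q vtx set" where
  "Gs A w = {v. case v of VE i q \<Rightarrow> q \<in> states A
     | VA i q S \<Rightarrow> q \<in> states A \<and> S \<in> opts A q (w i)
     | VT i q q' \<Rightarrow> q \<in> states A \<and> q' \<in> states A}"

lemma Gs_simps [simp]:
  "VE i q \<in> Gs A w \<longleftrightarrow> q \<in> states A"
  "VA i q S \<in> Gs A w \<longleftrightarrow> q \<in> states A \<and> S \<in> opts A q (w i)"
  "VT i q q' \<in> Gs A w \<longleftrightarrow> q \<in> states A \<and> q' \<in> states A"
  unfolding Gs_def by simp_all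

definition PR :: "('q, 'a) apa \<Rightarrow> nat set" where
  "PR A = (\<lambda>(q, a, q'). prio A q a q') ` (states A \<times> alph A \<times> states A)"

lemma PR_finite: "wf_apa A \<Longrightarrow> finite (PR A)"
  unfolding PR_def wf_apa_def by simp

lemma PR_I: "q \<in> states A \<Longrightarrow> a \<in> alph A \<Longrightarrow> q' \<in> states A \<Longrightarrow> prio A q a q' \<in> PR A"
  unfolding PR_def by (rule image_eqI[where x="(q, a, q')"]) auto

definition cur :: "('q, 'a) apa \<Rightarrow> ('q, 'a) hist \<Rightarrow> 'q" where
  "cur A h = (if h = [] then init A else snd (snd (last h)))"

lemma play_props:
  "length (fst (play A ltr e u n)) = n \<and> snd (play A ltr e u n) = cur A (fst (play A ltr e u n))"
proof (induction n)
  case 0 then show ?case by (simp add: cur_def)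
next
  case (Suc n)
  then show ?case by (cases "play A ltr e u n") (simp add: Let_def cur_def)
qed

lemma play_Suc':
  "play A ltr e u (Suc n) =
    (let h = fst (play A ltr e u n); q = snd (play A ltr e u n); a = ltr h;
         q' = descend (e h a) (u h a) [] (trans A q a) in (h @ [(q, a, q')], q'))"
  by (cases "play A ltr e u n") (simp add: Let_def)

lemma play_trans_eq:
  "play_trans A ltr e u n = (snd (play A ltr e u n), ltr (fst (play A ltr e u n)), snd (play A ltr e u (Suc n)))"
proof -
  have l: "length (fst (play A ltr e u n)) = n" using play_props by blast
  show ?thesis unfolding play_trans_def play_Suc'[of A ltr e u n] using l by (simp add: Let_def nth_append)
qed

lemma play_next:
  "snd (play A ltr e u (Suc n)) = descend (e (fst (play A ltr e u n)) (ltr (fst (play A ltr e u n))))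
     (u (fst (play A ltr e u n)) (ltr (fst (play A ltr e u n)))) []
     (trans A (snd (play A ltr e u n)) (ltr (fst (play A ltr e u n))))"
  unfolding play_Suc'[of A ltr e u n] by (simp add: Let_def)

lemma play_hist_Suc:
  "fst (play A ltr e u (Suc n)) = fst (play A ltr e u n) @ [play_trans A ltr e u n]"
  unfolding play_trans_eq play_Suc'[of A ltr e u n] by (simp add: Let_def)

lemma play_init: "snd (play A ltr e u 0) = init A"
  by simp

context
  fixes A :: "('q, 'a) apa" and w :: "nat \<Rightarrow> 'a"
  assumes wfA: "wf_apa A" and wl: "\<And>i. w i \<in> alph A"
begin

interpretation g: arena "aE A w" aown "apr A w" by (rule arena_a)

lemma opts_props:
  assumes "q \<in> states A" "S \<in> opts A q (w i)"
  shows "S \<subseteq> states A" "S \<noteq> {}" "S \<subseteq> atoms (trans A q (w i))"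
proof -
  obtain s where S: "S = reach s (trans A q (w i))" using assms(2) unfolding opts_def by blast
  show "S \<subseteq> atoms (trans A q (w i))" using S reach_atoms[of s "trans A q (w i)"] by simp
  then show "S \<subseteq> states A" using wfA assms(1) wl unfolding wf_apa_def by blast
  show "S \<noteq> {}" using S reach_nonempty[of s "trans A q (w i)"] by simp
qed

lemma sg: "g.subgame (Gs A w)"
  unfolding g.subgame_def
proof
  fix v assume v: "v \<in> Gs A w"
  show "aE A w v \<inter> Gs A w \<noteq> {}"
  proof (cases v)
    case (VE i q)
    have "reach (\<lambda>_. False) (trans A q (w i)) \<in> opts A q (w i)" unfolding opts_def by blast
    then show ?thesis using VE v by auto
  next
    case (VA i q S)
    then have q: "q \<in> states A" "S \<in> opts A q (w i)" using v by auto
    then obtain q' where q': "q' \<in> S" using opts_props(2) by blast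
    then have "VT i q q' \<in> aE A w v" using VA opts_props(3)[OF q] by auto
    moreover have "VT i q q' \<in> Gs A w" using q' q opts_props(1)[OF q] by auto
    ultimately show ?thesis by blast
  next
    case (VT i q q')
    then show ?thesis using v by auto
  qed
qed

definition M where "M = Max (insert 0 (PR A))"

lemma bound: "\<forall>v\<in>Gs A w. apr A w v < Suc M"
proof
  fix v assume v: "v \<in> Gs A w"
  show "apr A w v < Suc M"
  proof (cases v)
    case (VT i q q')
    then have "apr A w v = prio A q (w i) q'" by simp
    moreover have "prio A q (w i) q' \<in> PR A" by (rule PR_I) (use v VT wl in auto)
    ultimately have "apr A w v \<in> PR A" by simp
    then show ?thesis unfolding M_def using PR_finite[OF wfA] by (simp add: le_imp_less_Suc)
  qed auto
qed

lemma stretch3_Suc3 [simp]: "stretch3 a b c (Suc (Suc (Suc (3 * n)))) = a (Suc n)"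
proof -
  have e: "Suc (Suc (Suc (3 * n))) = 3 * Suc n" by simp
  show ?thesis unfolding e by (rule stretch3_simps(1))
qed

lemma path3:
  assumes q: "\<And>n. qq n \<in> states A" and S: "\<And>n. SS n \<in> opts A (qq n) (w n)"
    and nx: "\<And>n. qq (Suc n) \<in> SS n"
  defines "\<pi> \<equiv> stretch3 (\<lambda>n. VE n (qq n)) (\<lambda>n. VA n (qq n) (SS n)) (\<lambda>n. VT n (qq n) (qq (Suc n)))"
  shows "g.ppath (Gs A w) \<pi>"
    and "parity_acc (\<lambda>k. apr A w (\<pi> k)) \<longleftrightarrow> parity_acc (\<lambda>n. prio A (qq n) (w n) (qq (Suc n)))"
proof -
  show "g.ppath (Gs A w) \<pi>" unfolding g.ppath_def
  proof
    fix k show "\<pi> (Suc k) \<in> aE A w (\<pi> k) \<inter> Gs A w"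
    proof (rule three_cases[of _ k])
      fix n show "\<pi> (Suc (3 * n)) \<in> aE A w (\<pi> (3 * n)) \<inter> Gs A w"
        unfolding \<pi>_def using q S by simp
    next
      fix n show "\<pi> (Suc (Suc (3 * n))) \<in> aE A w (\<pi> (Suc (3 * n))) \<inter> Gs A w"
      proof -
        have "qq (Suc n) \<in> SS n \<inter> atoms (trans A (qq n) (w n))" using nx[of n] opts_props(3)[OF q S, of n] by blast
        then have "VT n (qq n) (qq (Suc n)) \<in> aE A w (VA n (qq n) (SS n))" by simp
        moreover have "VT n (qq n) (qq (Suc n)) \<in> Gs A w" using q[of n] q[of "Suc n"] by simp
        ultimately show ?thesis unfolding \<pi>_def by simp
      qed
    next
      fix n show "\<pi> (Suc (Suc (Suc (3 * n)))) \<in> aE A w (\<pi> (Suc (Suc (3 * n)))) \<inter> Gs A w"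
        unfolding \<pi>_def using q by simp
    qed
  qed
  define f where "f n = prio A (qq n) (w n) (qq (Suc n))" for n
  have eq: "(\<lambda>k. apr A w (\<pi> k)) = stretch3 (\<lambda>_. 0) (\<lambda>_. 0) f"
  proof
    fix k show "apr A w (\<pi> k) = stretch3 (\<lambda>_. 0) (\<lambda>_. 0) f k"
      by (rule three_cases[of _ k]) (simp_all add: \<pi>_def f_def)
  qed
  have "range f \<subseteq> PR A"
  proof
    fix x assume "x \<in> range f"
    then obtain n where "x = f n" by blast
    then show "x \<in> PR A" unfolding f_def using PR_I[OF q wl q] by simp
  qed
  then have "finite (range f)" using PR_finite[OF wfA] finite_subset by blast
  then have "parity_acc (stretch3 (\<lambda>_. 0) (\<lambda>_. 0) f) \<longleftrightarrow> parity_acc f"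
    by (rule parity_acc_stretch)
  then show "parity_acc (\<lambda>k. apr A w (\<pi> k)) \<longleftrightarrow> parity_acc (\<lambda>n. prio A (qq n) (w n) (qq (Suc n)))"
  proof -
    have "f = (\<lambda>n. prio A (qq n) (w n) (qq (Suc n)))" by (rule ext) (simp add: f_def)
    then show ?thesis using \<open>parity_acc (stretch3 (\<lambda>_. 0) (\<lambda>_. 0) f) \<longleftrightarrow> parity_acc f\<close>
      unfolding eq by simp
  qed
qed


lemma lang_sub:
  assumes wL: "w \<in> apa_lang A"
  shows "\<exists>\<beta>. (\<forall>i. \<beta> i \<in> boxes_letter A (w i)) \<and> univ_acc A \<beta>"
proof -
  obtain W1 s1 W0 s0 where cov: "Gs A w \<subseteq> W1 \<union> W0" and d1: "g.dominion (Gs A w) True W1 s1"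
    and d0: "g.dominion (Gs A w) False W0 s0"
    using g.positional_determinacy[OF sg bound] by blast
  have v0: "VE 0 (init A) \<in> Gs A w" using wfA unfolding wf_apa_def by simp
  show ?thesis
  proof (cases "VE 0 (init A) \<in> W1")
    case True
    define \<sigma> where "\<sigma> i q = (SOME s. s1 (VE i q) = VA i q (reach s (trans A q (w i))))" for i q
    have \<sigma>_ok: "s1 (VE i q) = VA i q (reach (\<sigma> i q) (trans A q (w i)))" if "VE i q \<in> W1" for i q
    proof -
      have "s1 (VE i q) \<in> aE A w (VE i q)" using g.dominionD(2)[OF d1 that] by simp
      then have "\<exists>s. s1 (VE i q) = VA i q (reach s (trans A q (w i)))" by (auto simp: opts_def)
      from someI_ex[OF this] show ?thesis unfolding \<sigma>_def .
    qed
    define \<beta> where "\<beta> i = box A (w i) (\<sigma> i)" for i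
    have "univ_acc A \<beta>" unfolding univ_acc_def
    proof (intro allI impI)
      fix t assume t: "fst (t 0) = init A \<and> (\<forall>i. snd (snd (t i)) = fst (t (Suc i))) \<and> (\<forall>i. t i \<in> \<beta> i)"
      define qq where "qq n = fst (t n)" for n
      have tn: "t n = (qq n, w n, qq (Suc n)) \<and> qq n \<in> states A \<and>
          qq (Suc n) \<in> reach (\<sigma> n (qq n)) (trans A (qq n) (w n))" for n
      proof -
        have "t n \<in> box A (w n) (\<sigma> n)" using t unfolding \<beta>_def by blast
        then obtain q q' where qq': "t n = (q, w n, q')" "q \<in> states A" "q' \<in> reach (\<sigma> n q) (trans A q (w n))"
          unfolding box_def by blast
        moreover have "snd (snd (t n)) = qq (Suc n)" using t unfolding qq_def by blast
        ultimately show ?thesis unfolding qq_def by auto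
      qed
      define SS where "SS n = reach (\<sigma> n (qq n)) (trans A (qq n) (w n))" for n
      have q: "qq n \<in> states A" for n using tn by blast
      have S: "SS n \<in> opts A (qq n) (w n)" for n unfolding SS_def opts_def by blast
      have nx: "qq (Suc n) \<in> SS n" for n using tn unfolding SS_def by blast
      define \<pi> where "\<pi> = stretch3 (\<lambda>n. VE n (qq n)) (\<lambda>n. VA n (qq n) (SS n)) (\<lambda>n. VT n (qq n) (qq (Suc n)))"
      have pp: "g.ppath (Gs A w) \<pi>"
        and par: "parity_acc (\<lambda>k. apr A w (\<pi> k)) \<longleftrightarrow> parity_acc (\<lambda>n. prio A (qq n) (w n) (qq (Suc n)))"
        using path3[of qq SS, OF q S nx] unfolding \<pi>_def by blast+
      have stepE: "VA n (qq n) (SS n) \<in> W1 \<and> VT n (qq n) (qq (Suc n)) \<in> W1 \<and> VE (Suc n) (qq (Suc n)) \<in> W1"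
        if a0: "VE n (qq n) \<in> W1" for n
      proof -
        have "s1 (VE n (qq n)) \<in> W1" using g.dominionD(3)[OF d1 a0] by simp
        then have a: "VA n (qq n) (SS n) \<in> W1" using \<sigma>_ok[OF a0] unfolding SS_def by simp
        have "qq (Suc n) \<in> SS n \<inter> atoms (trans A (qq n) (w n))" using nx[of n] opts_props(3)[OF q S, of n] by blast
        then have "VT n (qq n) (qq (Suc n)) \<in> aE A w (VA n (qq n) (SS n))" by simp
        moreover have "VT n (qq n) (qq (Suc n)) \<in> Gs A w" using q[of n] q[of "Suc n"] by simp
        ultimately have b: "VT n (qq n) (qq (Suc n)) \<in> W1" using g.dominionD(4)[OF d1 a] by simp
        have "s1 (VT n (qq n) (qq (Suc n))) \<in> aE A w (VT n (qq n) (qq (Suc n)))"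
          using g.dominionD(2)[OF d1 b] by simp
        moreover have "s1 (VT n (qq n) (qq (Suc n))) \<in> W1" using g.dominionD(3)[OF d1 b] by simp
        ultimately have "VE (Suc n) (qq (Suc n)) \<in> W1" by simp
        then show ?thesis using a b by blast
      qed
      have inW: "VE n (qq n) \<in> W1" for n
      proof (induction n)
        case 0 then show ?case using True t unfolding qq_def by simp
      next
        case (Suc n) then show ?case using stepE by blast
      qed
      have cons: "g.cons True s1 \<pi>" unfolding g.cons_def
      proof
        fix k
        show "aown (\<pi> k) = True \<longrightarrow> \<pi> (Suc k) = s1 (\<pi> k)"
        proof (rule three_cases[where P = "\<lambda>k. aown (\<pi> k) = True \<longrightarrow> \<pi> (Suc k) = s1 (\<pi> k)"])
          fix n show "aown (\<pi> (3 * n)) = True \<longrightarrow> \<pi> (Suc (3 * n)) = s1 (\<pi> (3 * n))"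
            unfolding \<pi>_def using \<sigma>_ok[OF inW[of n]] unfolding SS_def by simp
        next
          fix n show "aown (\<pi> (Suc (3 * n))) = True \<longrightarrow> \<pi> (Suc (Suc (3 * n))) = s1 (\<pi> (Suc (3 * n)))"
            unfolding \<pi>_def by simp
        next
          fix n
          have b: "VT n (qq n) (qq (Suc n)) \<in> W1" using stepE[OF inW[of n]] by blast
          have "s1 (VT n (qq n) (qq (Suc n))) \<in> aE A w (VT n (qq n) (qq (Suc n)))"
            using g.dominionD(2)[OF d1 b] by simp
          then show "aown (\<pi> (Suc (Suc (3 * n)))) = True \<longrightarrow> \<pi> (Suc (Suc (Suc (3 * n)))) = s1 (\<pi> (Suc (Suc (3 * n))))"
            unfolding \<pi>_def by simp
        qed
      qed
      have "\<pi> 0 \<in> W1" using inW[of 0] unfolding \<pi>_def by simp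
      then have "g.win True \<pi>" using g.dominionD(5)[OF d1 _ pp cons] by blast
      then have pa: "parity_acc (\<lambda>n. prio A (qq n) (w n) (qq (Suc n)))" using par unfolding g.win_def by simp
      have "(\<lambda>i. case t i of (q, a, q') \<Rightarrow> prio A q a q') = (\<lambda>n. prio A (qq n) (w n) (qq (Suc n)))"
      proof
        fix i show "(case t i of (q, a, q') \<Rightarrow> prio A q a q') = prio A (qq i) (w i) (qq (Suc i))"
          using tn[of i] by simp
      qed
      then show "acc_trans A t" unfolding acc_trans_def using pa by simp
    qed
    moreover have "\<forall>i. \<beta> i \<in> boxes_letter A (w i)" unfolding \<beta>_def boxes_letter_def by blast
    ultimately show ?thesis by blast
  next
    case False
    then have v0W: "VE 0 (init A) \<in> W0" using cov v0 by blast
    from wL obtain e where ewin: "\<forall>u. acc_trans A (play_trans A (\<lambda>h. w (length h)) e u)"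
      unfolding apa_lang_def by blast
    define Ob where "Ob h a = {descend (e h a) u [] (trans A (cur A h) a) | u. True}" for h a
    define Sh where "Sh h a = reach (ls (Ob h a)) (trans A (cur A h) a)" for h a
    define tgt where "tgt h a = (case s0 (VA (length h) (cur A h) (Sh h a)) of VT _ _ q' \<Rightarrow> q' | _ \<Rightarrow> init A)" for h a
    define uA where "uA h a = (SOME u'. descend (e h a) u' [] (trans A (cur A h) a) = tgt h a)" for h a
    define ltr where "ltr = (\<lambda>h :: ('q, 'a) hist. w (length h))"
    define hh where "hh n = fst (play A ltr e uA n)" for n
    define qq where "qq n = snd (play A ltr e uA n)" for n
    have len: "length (hh n) = n" for n using play_props[of A ltr e uA n] unfolding hh_def by simp
    have cq: "cur A (hh n) = qq n" for n using play_props[of A ltr e uA n] unfolding hh_def qq_def by simp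
    have lt: "ltr (hh n) = w n" for n unfolding ltr_def using len by simp
    have nxq: "qq (Suc n) = descend (e (hh n) (w n)) (uA (hh n) (w n)) [] (trans A (qq n) (w n))" for n
      using play_next[of A ltr e uA n] lt[of n] unfolding hh_def qq_def by simp
    define SS where "SS n = Sh (hh n) (w n)" for n
    have SSeq: "SS n = reach (ls (Ob (hh n) (w n))) (trans A (qq n) (w n))" for n
      unfolding SS_def Sh_def cq ..
    have SSO: "SS n \<subseteq> Ob (hh n) (w n)" for n
    proof -
      have "canwin (Ob (hh n) (w n)) (trans A (qq n) (w n))"
      proof (rule canwin_O[where c = "e (hh n) (w n)" and p = "[]"])
        fix u show "descend (e (hh n) (w n)) u [] (trans A (qq n) (w n)) \<in> Ob (hh n) (w n)"
          unfolding Ob_def cq by blast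
      qed
      then show ?thesis unfolding SSeq by (rule reach_ls)
    qed
    have S: "SS n \<in> opts A (qq n) (w n)" for n unfolding SSeq opts_def by blast
    have step: "qq (Suc n) \<in> SS n \<and> s0 (VA n (qq n) (SS n)) = VT n (qq n) (qq (Suc n)) \<and>
        VE (Suc n) (qq (Suc n)) \<in> W0" if a: "VE n (qq n) \<in> W0" for n
    proof -
      have qs: "qq n \<in> states A" using g.dominionD(1)[OF d0] a by auto
      have "VA n (qq n) (SS n) \<in> aE A w (VE n (qq n))" using S[of n] by simp
      moreover have "VA n (qq n) (SS n) \<in> Gs A w" using qs S[of n] by simp
      ultimately have b: "VA n (qq n) (SS n) \<in> W0" using g.dominionD(4)[OF d0 a] by simp
      have "s0 (VA n (qq n) (SS n)) \<in> aE A w (VA n (qq n) (SS n))" using g.dominionD(2)[OF d0 b] by simp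
      then obtain q' where q': "q' \<in> SS n" "s0 (VA n (qq n) (SS n)) = VT n (qq n) q'" by auto
      have tg: "tgt (hh n) (w n) = q'" unfolding tgt_def using q' len cq unfolding SS_def by simp
      have "q' \<in> Ob (hh n) (w n)" using q' SSO by blast
      then have "\<exists>u'. descend (e (hh n) (w n)) u' [] (trans A (cur A (hh n)) (w n)) = tgt (hh n) (w n)"
        unfolding Ob_def tg by blast
      from someI_ex[OF this] have "descend (e (hh n) (w n)) (uA (hh n) (w n)) [] (trans A (cur A (hh n)) (w n)) = q'"
        unfolding uA_def tg .
      then have qn: "qq (Suc n) = q'" using nxq[of n] cq[of n] by simp
      have c: "VT n (qq n) q' \<in> W0" using g.dominionD(3)[OF d0 b] q' by simp
      then have "q' \<in> states A" using g.dominionD(1)[OF d0] by auto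
      then have "VE (Suc n) q' \<in> W0" using g.dominionD(4)[OF d0 c] by simp
      then show ?thesis using q' qn by simp
    qed
    have inW: "VE n (qq n) \<in> W0" for n
    proof (induction n)
      case 0 then show ?case using v0W unfolding qq_def by simp
    next
      case (Suc n) then show ?case using step by blast
    qed
    have q: "qq n \<in> states A" for n using g.dominionD(1)[OF d0] inW[of n] by auto
    have nx: "qq (Suc n) \<in> SS n" for n using step[OF inW[of n]] by blast
    define \<pi> where "\<pi> = stretch3 (\<lambda>n. VE n (qq n)) (\<lambda>n. VA n (qq n) (SS n)) (\<lambda>n. VT n (qq n) (qq (Suc n)))"
    have pp: "g.ppath (Gs A w) \<pi>"
      and par: "parity_acc (\<lambda>k. apr A w (\<pi> k)) \<longleftrightarrow> parity_acc (\<lambda>n. prio A (qq n) (w n) (qq (Suc n)))"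
      using path3[of qq SS, OF q S nx] unfolding \<pi>_def by blast+
    have cons: "g.cons False s0 \<pi>" unfolding g.cons_def
    proof
      fix k
      show "aown (\<pi> k) = False \<longrightarrow> \<pi> (Suc k) = s0 (\<pi> k)"
      proof (rule three_cases[where P = "\<lambda>k. aown (\<pi> k) = False \<longrightarrow> \<pi> (Suc k) = s0 (\<pi> k)"])
        fix n show "aown (\<pi> (3 * n)) = False \<longrightarrow> \<pi> (Suc (3 * n)) = s0 (\<pi> (3 * n))"
          unfolding \<pi>_def by simp
      next
        fix n show "aown (\<pi> (Suc (3 * n))) = False \<longrightarrow> \<pi> (Suc (Suc (3 * n))) = s0 (\<pi> (Suc (3 * n)))"
          unfolding \<pi>_def using step[OF inW[of n]] by simp
      next
        fix n show "aown (\<pi> (Suc (Suc (3 * n)))) = False \<longrightarrow> \<pi> (Suc (Suc (Suc (3 * n)))) = s0 (\<pi> (Suc (Suc (3 * n))))"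
          unfolding \<pi>_def by simp
      qed
    qed
    have "\<pi> 0 \<in> W0" using inW[of 0] unfolding \<pi>_def by simp
    then have "g.win False \<pi>" using g.dominionD(5)[OF d0 _ pp cons] by blast
    then have npa: "\<not> parity_acc (\<lambda>n. prio A (qq n) (w n) (qq (Suc n)))" using par unfolding g.win_def by simp
    have "acc_trans A (play_trans A ltr e uA)" using ewin unfolding ltr_def by blast
    moreover have "(\<lambda>i. case play_trans A ltr e uA i of (q, a, q') \<Rightarrow> prio A q a q') =
        (\<lambda>n. prio A (qq n) (w n) (qq (Suc n)))"
    proof
      fix i show "(case play_trans A ltr e uA i of (q, a, q') \<Rightarrow> prio A q a q') = prio A (qq i) (w i) (qq (Suc i))"
        using play_trans_eq[of A ltr e uA i] lt[of i] unfolding hh_def qq_def by simp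
    qed
    ultimately show ?thesis using npa unfolding acc_trans_def by simp
  qed
qed

end


lemma gfg_len: "length (gfg_play ad ev n) = n"
  by (induction n) (simp_all add: Let_def)

lemma gfg_agree: "(\<And>H. length H < n \<Longrightarrow> ad H = ad' H) \<Longrightarrow> gfg_play ad ev n = gfg_play ad' ev n"
proof (induction n)
  case 0 then show ?case by simp
next
  case (Suc n)
  then have eq: "gfg_play ad ev n = gfg_play ad' ev n" by simp
  have "ad (gfg_play ad ev n) = ad' (gfg_play ad ev n)" using Suc.prems gfg_len[of ad ev n] by simp
  then show ?case using eq by (simp add: Let_def)
qed

lemma gfg_nth: "gfg_play ad ev (Suc i) ! i = (ad (gfg_play ad ev i), ev (gfg_play ad ev i) (ad (gfg_play ad ev i)))"
  using gfg_len[of ad ev i] by (simp add: Let_def nth_append)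

theorem mainTheorem7:
  fixes A :: "('q, 'a) apa" and B :: "('p, ('q \<times> 'a \<times> 'q) set) dpa"
  assumes "wf_apa A"
    and "recognises_univ_acc A B"
    and "BA_gfg A B"
  shows "exists_gfg A"
proof -
  note wfA = assms(1)
  from assms(3) obtain ev where evb: "\<forall>h a. a \<in> alph A \<longrightarrow> ev h a \<in> boxes_letter A a"
    and evw: "\<forall>ad. (\<forall>h. ad h \<in> alph A) \<longrightarrow>
        ((\<lambda>i. fst (gfg_play ad ev (Suc i) ! i)) \<notin> BA_lang A B \<or>
         dpa_accepts B (\<lambda>i. snd (gfg_play ad ev (Suc i) ! i)))"
    unfolding BA_gfg_def by blast
  have recB: "\<And>\<beta>. (\<forall>i. \<beta> i \<in> boxes A) \<Longrightarrow> dpa_accepts B \<beta> \<longleftrightarrow> univ_acc A \<beta>"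
    using assms(2) unfolding recognises_univ_acc_def by blast
  define letters where "letters h = map (\<lambda>x. fst (snd x)) h" for h :: "('q, 'a) hist"
  define gh where "gh L = gfg_play (\<lambda>H. L ! length H) ev (length L)" for L
  define sig where "sig h a = (SOME \<sigma>. ev (gh (letters h)) a = box A a \<sigma>)" for h a
  define eS where "eS h a pos = sig h a (cur A h) (subf (trans A (cur A h) a) pos)" for h a pos
  show ?thesis unfolding exists_gfg_def
  proof (intro exI allI impI)
    fix ltr :: "('q, 'a) hist \<Rightarrow> 'a" and u :: "('q, 'a) strat" assume lal: "\<forall>h. ltr h \<in> alph A"
    define hh where "hh n = fst (play A ltr eS u n)" for n
    define qq where "qq n = snd (play A ltr eS u n)" for n
    define W where "W n = ltr (hh n)" for n
    have Wal: "W i \<in> alph A" for i unfolding W_def using lal by blast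
    have len: "length (hh n) = n" for n using play_props[of A ltr eS u n] unfolding hh_def by simp
    have cq: "cur A (hh n) = qq n" for n using play_props[of A ltr eS u n] unfolding hh_def qq_def by simp
    have pt: "play_trans A ltr eS u n = (qq n, W n, qq (Suc n))" for n
      using play_trans_eq[of A ltr eS u n] unfolding hh_def qq_def W_def by simp
    have nxq: "qq (Suc n) = descend (eS (hh n) (W n)) (u (hh n) (W n)) [] (trans A (qq n) (W n))" for n
      using play_next[of A ltr eS u n] unfolding hh_def qq_def W_def by simp
    have q0: "qq 0 = init A" unfolding qq_def by simp
    have qs: "qq n \<in> states A" for n
    proof (induction n)
      case 0 then show ?case using q0 wfA unfolding wf_apa_def by simp
    next
      case (Suc n)
      have "qq (Suc n) \<in> atoms (trans A (qq n) (W n))" unfolding nxq[of n] by (rule descend_atoms)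
      then show ?case using wfA Suc Wal[of n] unfolding wf_apa_def by blast
    qed
    have wordeq: "(\<lambda>i. fst (snd (play_trans A ltr eS u i))) = W" using pt by simp
    have letters_hh: "letters (hh n) = map W [0..<n]" for n
    proof (induction n)
      case 0 then show ?case unfolding letters_def hh_def by simp
    next
      case (Suc n)
      have "hh (Suc n) = hh n @ [play_trans A ltr eS u n]" unfolding hh_def by (rule play_hist_Suc)
      then show ?case using Suc pt[of n] unfolding letters_def by simp
    qed
    define ad where "ad H = W (length H)" for H :: "('a \<times> ('q \<times> 'a \<times> 'q) set) list"
    have adal: "\<forall>H. ad H \<in> alph A" unfolding ad_def using Wal by blast
    have ghh: "gh (letters (hh n)) = gfg_play ad ev n" for n
    proof -
      have "gh (letters (hh n)) = gfg_play (\<lambda>H. map W [0..<n] ! length H) ev n"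
        unfolding gh_def letters_hh by simp
      also have "\<dots> = gfg_play ad ev n"
        by (rule gfg_agree) (simp add: ad_def)
      finally show ?thesis .
    qed
    define \<beta> where "\<beta> i = ev (gfg_play ad ev i) (W i)" for i
    have gn: "gfg_play ad ev (Suc i) ! i = (W i, \<beta> i)" for i
      unfolding gfg_nth \<beta>_def ad_def gfg_len by simp
    have \<beta>bl: "\<beta> i \<in> boxes_letter A (W i)" for i unfolding \<beta>_def using evb Wal by blast
    have \<beta>b: "\<forall>i. \<beta> i \<in> boxes A" unfolding boxes_def using \<beta>bl Wal by blast
    show "(\<lambda>i. fst (snd (play_trans A ltr eS u i))) \<notin> apa_lang A \<or> acc_trans A (play_trans A ltr eS u)"
    proof (cases "W \<in> apa_lang A")
      case False then show ?thesis unfolding wordeq by blast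
    next
      case True
      obtain \<beta>' where \<beta>': "\<forall>i. \<beta>' i \<in> boxes_letter A (W i)" "univ_acc A \<beta>'"
        using lang_sub[OF wfA Wal True] by blast
      have "\<forall>i. \<beta>' i \<in> boxes A" unfolding boxes_def using \<beta>'(1) Wal by blast
      then have "dpa_accepts B \<beta>'" using recB \<beta>'(2) by blast
      then have WB: "W \<in> BA_lang A B" unfolding BA_lang_def using Wal \<beta>'(1) by blast
      have "(\<lambda>i. fst (gfg_play ad ev (Suc i) ! i)) = W" using gn by simp
      moreover have "(\<lambda>i. snd (gfg_play ad ev (Suc i) ! i)) = \<beta>" using gn by simp
      moreover have "(\<lambda>i. fst (gfg_play ad ev (Suc i) ! i)) \<notin> BA_lang A B \<or>
         dpa_accepts B (\<lambda>i. snd (gfg_play ad ev (Suc i) ! i))" using evw adal by blast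
      ultimately have "dpa_accepts B \<beta>" using WB by simp
      then have ua: "univ_acc A \<beta>" using recB \<beta>b by blast
      have tin: "play_trans A ltr eS u i \<in> \<beta> i" for i
      proof -
        have "\<exists>\<sigma>. ev (gh (letters (hh i))) (W i) = box A (W i) \<sigma>"
          using \<beta>bl[of i] unfolding ghh \<beta>_def boxes_letter_def by blast
        from someI_ex[OF this] have bx: "\<beta> i = box A (W i) (sig (hh i) (W i))"
          unfolding sig_def ghh \<beta>_def .
        have "qq (Suc i) \<in> reach (sig (hh i) (W i) (qq i)) (trans A (qq i) (W i))"
        proof -
          have "eS (hh i) (W i) = (\<lambda>pos. sig (hh i) (W i) (qq i) (subf (trans A (qq i) (W i)) pos))"
            unfolding eS_def cq by simp
          then show ?thesis unfolding nxq[of i] using descend_reach[of "trans A (qq i) (W i)" "[]"] by simp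
        qed
        then have "(qq i, W i, qq (Suc i)) \<in> box A (W i) (sig (hh i) (W i))"
          unfolding box_def using qs[of i] by simp
        then show ?thesis unfolding pt bx .
      qed
      have ch: "fst (play_trans A ltr eS u 0) = init A \<and>
          (\<forall>i. snd (snd (play_trans A ltr eS u i)) = fst (play_trans A ltr eS u (Suc i))) \<and>
          (\<forall>i. play_trans A ltr eS u i \<in> \<beta> i)"
        using pt q0 tin by simp
      have "acc_trans A (play_trans A ltr eS u)"
        using ua ch unfolding univ_acc_def by blast
      then show ?thesis by blast
    qed
  qed
qed


end
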